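(* Let $\mathcal D$ be a preduoidal category with monoidal structures $(\circ,\bot)$ and $(\bullet,1)$, and let $T$ be a separately opmonoidal monad on $\mathcal D$. Equip $\mathcal D^T$ with the two lifted monoidal structures $(\mathcal D^T,\circ,(\bot,T^\circ_0))$ and $(\mathcal D^T,\bullet,(1,T^\bullet_0))$. Then R-matrices $(R,\nu,\varpi,\iota)$ on $T$ are in bijective correspondence with duoidal structures $(\xi,\nu,\varpi,\iota)$ on $\mathcal D^T$ (with respect to these two lifted monoidal structures), the structure morphisms $\nu,\varpi,\iota$ being the same on both sides. Explicitly, an R-matrix $R$ yields the interchange law $$\xi_{(a,\alpha),(b,\beta),(c,\gamma),(d,\delta)} := ((\alpha\circ\gamma)\bullet(\beta\circ\delta))\cdot R_{a,b,c,d}\colon (a\bullet b)\circ(c\bullet d)\to(a\circ c)\bullet(b\circ d)$$ for all $T$-algebras $(a,\alpha),(b,\beta),(c,\gamma),(d,\delta)$; conversely an interchange law $\xi$ on $\mathcal D^T$ yields $$R_{a,b,c,d} := \xi_{Ta,Tb,Tc,Td}\cdot\big((\eta_a\bullet\eta_b)\circ(\eta_c\bullet\eta_d)\big)\colon (a\bullet b)\circ(c\bullet d)\to (Ta\circ Tc)\bullet(Tb\circ Td)$$ for all objects $a,b,c,d$ of $\mathcal D$ (where $Ta$ denotes the free algebra $(Ta,\mu_a)$). These two constructions are mutually inverse.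
   Context: Composition of morphisms is written $g\cdot f$ ($f$ first), to avoid clash with the tensor product $\circ$. A preduoidal category is a category $\mathcal D$ with two monoidal structures $(\circ,\bot)$ and $(\bullet,1)$ (associators $\alpha$, left/right unitors $\lambda^\circ,\rho^\circ$ for $\circ$ and $\lambda^\bullet,\rho^\bullet$ for $\bullet$). A bimonad on a monoidal category $(\mathcal C,\otimes,I)$ is a monad $(B,\mu,\eta)$ with an opmonoidal structure $B_2\colon B(x\otimes y)\to Bx\otimes By$, $B_0\colon BI\to I$ such that $\mu,\eta$ are opmonoidal natural transformations. A separately opmonoidal monad on $\mathcal D$ is a monad $(T,\mu,\eta)$ together with a bimonad structure $(T^\circ_2,T^\circ_0)$ on $(\mathcal D,\circ,\bot)$ and a bimonad structure $(T^\bullet_2,T^\bullet_0)$ on $(\mathcal D,\bullet,1)$. Then the Eilenberg–Moore category $\mathcal D^T$ of $T$-algebras has lifted monoidal structures: $(a,\alpha)\circ(b,\beta)=(a\circ b,(\alpha\circ\beta)\cdot T^\circ_{2,a,b})$ with unit $(\bot,T^\circ_0)$, and $(a,\alpha)\bullet(b,\beta)=(a\bullet b,(\alpha\bullet\beta)\cdot T^\bullet_{2,a,b})$ with unit $(1,T^\bullet_0)$; the forgetful functor is strict monoidal for both. Duoidal category: a preduoidal category with a natural transformation $\zeta_{x,y,a,b}\colon (x\bullet y)\circ(a\bullet b)\to(x\circ a)\bullet(y\circ b)$ and morphisms $\nu\colon\bot\to\bot\bullet\bot$, $\varpi\colon 1\circ 1\to 1$, $\iota\colon\bot\to 1$ such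 that $(1,\varpi,\iota)$ is a monoid in $(\mathcal D,\circ,\bot)$, $(\bot,\nu,\iota)$ is a comonoid in $(\mathcal D,\bullet,1)$, and: (A1) $(\alpha\bullet\alpha)\cdot\zeta_{x\circ a,y\circ b,c,d}\cdot(\zeta_{x,y,a,b}\circ\mathrm{id}) = \zeta_{x,y,a\circ c,b\circ d}\cdot(\mathrm{id}\circ\zeta_{a,b,c,d})\cdot\alpha$ as maps $((x\bullet y)\circ(a\bullet b))\circ(c\bullet d)\to(x\circ(a\circ c))\bullet(y\circ(b\circ d))$; (A2) $\alpha\cdot(\zeta_{x,a,y,b}\bullet\mathrm{id})\cdot\zeta_{x\bullet a,c,y\bullet b,d} = (\mathrm{id}\bullet\zeta_{a,c,b,d})\cdot\zeta_{x,a\bullet c,y,b\bullet d}\cdot(\alpha\circ\alpha)$ as maps $((x\bullet a)\bullet c)\circ((y\bullet b)\bullet d)\to(x\circ y)\bullet((a\circ b)\bullet(c\circ d))$; (U) $\zeta_{\bot,\bot,a,b}\cdot(\nu\circ\mathrm{id})=((\lambda^\circ_a)^{-1}\bullet(\lambda^\circ_b)^{-1})\cdot\lambda^\circ_{a\bullet b}$, $\zeta_{a,b,\bot,\bot}\cdot(\mathrm{id}\circ\nu)=((\rho^\circ_a)^{-1}\bullet(\rho^\circ_b)^{-1})\cdot\rho^\circ_{a\bullet b}$, $(\varpi\bullet\mathrm{id})\cdot\zeta_{1,a,1,b}=(\lambda^\bullet_{a\circ b})^{-1}\cdot(\lambda^\bullet_a\circ\lambda^\bullet_b)$, $(\mathrm{id}\bullet\varpi)\cdot\zeta_{a,1,b,1}=(\rho^\bullet_{a\circ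 b})^{-1}\cdot(\rho^\bullet_a\circ\rho^\bullet_b)$. A duoidal structure on $\mathcal D^T$ means such data $(\xi,\nu,\varpi,\iota)$ for the lifted monoidal structures, with $\xi$ a natural family of morphisms of $T$-algebras and $\nu,\varpi,\iota$ morphisms of $T$-algebras. R-matrix on a separately opmonoidal monad $T$: a natural transformation $R_{a,b,c,d}\colon (a\bullet b)\circ(c\bullet d)\to(Ta\circ Tc)\bullet(Tb\circ Td)$ ($a,b,c,d\in\mathcal D$) together with morphisms of $T$-algebras $\nu\colon(\bot,T^\circ_0)\to(\bot,T^\circ_0)\bullet(\bot,T^\circ_0)$, $\varpi\colon(1,T^\bullet_0)\circ(1,T^\bullet_0)\to(1,T^\bullet_0)$, $\iota\colon(\bot,T^\circ_0)\to(1,T^\bullet_0)$, such that $(1,\varpi,\iota)$ is a monoid in $(\mathcal D^T,\circ,\bot)$, $(\bot,\nu,\iota)$ is a comonoid in $(\mathcal D^T,\bullet,1)$, and (associators suppressed, i.e. inserted canonically): (R-unit) for all $T$-algebras $(a,\alpha),(b,\beta)$: $((T^\circ_0\circ\alpha)\bullet(T^\circ_0\circ\beta))\cdot R_{\bot,\bot,a,b}\cdot(\nu\circ\mathrm{id})=((\lambda^\circ_a)^{-1}\bullet(\lambda^\circ_b)^{-1})\cdot\lambda^\circ_{a\bullet b}$; $((\alpha\circ T^\circ_0)\bullet(\beta\circ T^\circ_0))\cdot R_{a,b,\bot,\bot}\cdot(\mathrm{id}\circ\nu)=((\rho^\circ_a)^{-1}\bullet(\rho^\circ_b)^{-1})\cdot\rho^\circ_{a\bullet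 b}$; $(\varpi\bullet\mathrm{id})\cdot((T^\bullet_0\circ T^\bullet_0)\bullet(\alpha\circ\beta))\cdot R_{1,a,1,b}=(\lambda^\bullet_{a\circ b})^{-1}\cdot(\lambda^\bullet_a\circ\lambda^\bullet_b)$; $(\mathrm{id}\bullet\varpi)\cdot((\alpha\circ\beta)\bullet(T^\bullet_0\circ T^\bullet_0))\cdot R_{a,1,b,1}=(\rho^\bullet_{a\circ b})^{-1}\cdot(\rho^\bullet_a\circ\rho^\bullet_b)$. (R-lift) for all objects $a,b,c,d$: $((\mu_a\circ\mu_c)\bullet(\mu_b\circ\mu_d))\cdot R_{Ta,Tb,Tc,Td}\cdot(T^\bullet_{2,a,b}\circ T^\bullet_{2,c,d})\cdot T^\circ_{2,a\bullet b,c\bullet d} = ((\mu_a\circ\mu_c)\bullet(\mu_b\circ\mu_d))\cdot(T^\circ_{2,Ta,Tc}\bullet T^\circ_{2,Tb,Td})\cdot T^\bullet_{2,Ta\circ Tc,Tb\circ Td}\cdot TR_{a,b,c,d}$. (R-1) for all objects $a,b,c,d,x,y$, as maps $(a\bullet b)\circ(c\bullet d)\circ(x\bullet y)\to(Ta\circ Tc\circ Tx)\bullet(Tb\circ Td\circ Ty)$: $((\mu_a\circ\mu_c\circ Tx)\bullet(\mu_b\circ\mu_d\circ Ty))\cdot((T^\circ_{2,Ta,Tc}\circ Tx)\bullet(T^\circ_{2,Tb,Td}\circ Ty))\cdot R_{Ta\circ Tc,Tb\circ Td,x,y}\cdot(R_{a,b,c,d}\circ\mathrm{id}) = ((Ta\circ\mu_c\circ\mu_x)\bullet(Tb\circ\mu_d\circ\mu_y))\cdot((Ta\circ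 T^\circ_{2,Tc,Tx})\bullet(Tb\circ T^\circ_{2,Td,Ty}))\cdot R_{a,b,Tc\circ Tx,Td\circ Ty}\cdot(\mathrm{id}\circ R_{c,d,x,y})$. (R-2) for all objects $x,a,c,y,b,d$, as maps $((x\bullet a)\bullet c)\circ((y\bullet b)\bullet d)\to(Tx\circ Ty)\bullet(Ta\circ Tb)\bullet(Tc\circ Td)$: $(((\mu_x\circ\mu_y)\bullet(\mu_a\circ\mu_b))\bullet\mathrm{id})\cdot(R_{Tx,Ta,Ty,Tb}\bullet\mathrm{id})\cdot((T^\bullet_{2,x,a}\circ T^\bullet_{2,y,b})\bullet\mathrm{id})\cdot R_{x\bullet a,c,y\bullet b,d} = (\mathrm{id}\bullet((\mu_a\circ\mu_b)\bullet(\mu_c\circ\mu_d)))\cdot(\mathrm{id}\bullet R_{Ta,Tc,Tb,Td})\cdot(\mathrm{id}\bullet(T^\bullet_{2,a,c}\circ T^\bullet_{2,b,d}))\cdot R_{x,a\bullet c,y,b\bullet d}\cdot(\alpha\circ\alpha)$. A quasitriangular structure on $T$ is an R-matrix on $T$. *)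

theory Defs
  imports Main
begin

section \<open>Categories (objects = elements of a type, arrows = a set)\<close>

text \<open>Composition: cmp C g f is g after f (f first), i.e. the paper's g.f\<close>

record ('o,'m) cat =
  arr :: "'m set"
  dm  :: "'m \<Rightarrow> 'o"
  cd  :: "'m \<Rightarrow> 'o"
  idm :: "'o \<Rightarrow> 'm"
  cmp :: "'m \<Rightarrow> 'm \<Rightarrow> 'm"

text \<open>Monoidal structure: tensor on objects and arrows, unit, associator
  (a x b) x c -> a x (b x c), left unitor I x a -> a, right unitor a x I -> a\<close>

record ('o,'m) monoidal =
  tobj  :: "'o \<Rightarrow> 'o \<Rightarrow> 'o"
  tarr  :: "'m \<Rightarrow> 'm \<Rightarrow> 'm"
  munit :: "'o"
  asc   :: "'o \<Rightarrow> 'o \<Rightarrow> 'o \<Rightarrow> 'm"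
  lu    :: "'o \<Rightarrow> 'm"
  ru    :: "'o \<Rightarrow> 'm"

record ('o,'m) monad =
  Tob :: "'o \<Rightarrow> 'o"
  Tar :: "'m \<Rightarrow> 'm"
  mu  :: "'o \<Rightarrow> 'm"
  eta :: "'o \<Rightarrow> 'm"

locale cat_ctx =
  fixes C :: "('o,'m) cat"
begin

abbreviation comp (infixr "\<cdot>" 55) where "g \<cdot> f \<equiv> cmp C g f"
abbreviation Id where "Id a \<equiv> idm C a"

definition Hom :: "'o \<Rightarrow> 'o \<Rightarrow> 'm set" where
  "Hom a b = {f \<in> arr C. dm C f = a \<and> cd C f = b}"

definition category :: bool where
  "category \<longleftrightarrow>
     (\<forall>a. Id a \<in> Hom a a) \<and>
     (\<forall>a b c f g. f \<in> Hom a b \<longrightarrow> g \<in> Hom b c \<longrightarrow> g \<cdot> f \<in> Hom a c) \<and>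
     (\<forall>a b f. f \<in> Hom a b \<longrightarrow> f \<cdot> Id a = f \<and> Id b \<cdot> f = f) \<and>
     (\<forall>a b c d f g h. f \<in> Hom a b \<longrightarrow> g \<in> Hom b c \<longrightarrow> h \<in> Hom c d \<longrightarrow>
        h \<cdot> (g \<cdot> f) = (h \<cdot> g) \<cdot> f)"

definition is_iso :: "'m \<Rightarrow> bool" where
  "is_iso f \<longleftrightarrow> f \<in> arr C \<and>
     (\<exists>g \<in> Hom (cd C f) (dm C f). g \<cdot> f = Id (dm C f) \<and> f \<cdot> g = Id (cd C f))"

definition inv :: "'m \<Rightarrow> 'm" where
  "inv f = (SOME g. g \<in> Hom (cd C f) (dm C f) \<and> g \<cdot> f = Id (dm C f) \<and> f \<cdot> g = Id (cd C f))"

definition endofunctor :: "('o \<Rightarrow> 'o) \<Rightarrow> ('m \<Rightarrow> 'm) \<Rightarrow> bool" where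
  "endofunctor Fo Fm \<longleftrightarrow>
     (\<forall>a b f. f \<in> Hom a b \<longrightarrow> Fm f \<in> Hom (Fo a) (Fo b)) \<and>
     (\<forall>a. Fm (Id a) = Id (Fo a)) \<and>
     (\<forall>a b c f g. f \<in> Hom a b \<longrightarrow> g \<in> Hom b c \<longrightarrow> Fm (g \<cdot> f) = Fm g \<cdot> Fm f)"

definition is_monoidal :: "('o,'m) monoidal \<Rightarrow> bool" where
  "is_monoidal M \<longleftrightarrow>
     (\<forall>a b c d f g. f \<in> Hom a b \<longrightarrow> g \<in> Hom c d \<longrightarrow>
        tarr M f g \<in> Hom (tobj M a c) (tobj M b d)) \<and>
     (\<forall>a b. tarr M (Id a) (Id b) = Id (tobj M a b)) \<and>
     (\<forall>a b c x y z f f' g g'. f \<in> Hom a b \<longrightarrow> f' \<in> Hom b c \<longrightarrow> g \<in> Hom x y \<longrightarrow> g' \<in> Hom y z \<longrightarrow>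
        tarr M (f' \<cdot> f) (g' \<cdot> g) = tarr M f' g' \<cdot> tarr M f g) \<and>
     (\<forall>a b c. asc M a b c \<in> Hom (tobj M (tobj M a b) c) (tobj M a (tobj M b c)) \<and> is_iso (asc M a b c)) \<and>
     (\<forall>a a' b b' c c' f g h. f \<in> Hom a a' \<longrightarrow> g \<in> Hom b b' \<longrightarrow> h \<in> Hom c c' \<longrightarrow>
        asc M a' b' c' \<cdot> tarr M (tarr M f g) h = tarr M f (tarr M g h) \<cdot> asc M a b c) \<and>
     (\<forall>a. lu M a \<in> Hom (tobj M (munit M) a) a \<and> is_iso (lu M a)) \<and>
     (\<forall>a b f. f \<in> Hom a b \<longrightarrow> f \<cdot> lu M a = lu M b \<cdot> tarr M (Id (munit M)) f) \<and>
     (\<forall>a. ru M a \<in> Hom (tobj M a (munit M)) a \<and> is_iso (ru M a)) \<and>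
     (\<forall>a b f. f \<in> Hom a b \<longrightarrow> f \<cdot> ru M a = ru M b \<cdot> tarr M f (Id (munit M))) \<and>
     (\<forall>a b c d. asc M a b (tobj M c d) \<cdot> asc M (tobj M a b) c d =
        tarr M (Id a) (asc M b c d) \<cdot> asc M a (tobj M b c) d \<cdot> tarr M (asc M a b c) (Id d)) \<and>
     (\<forall>a b. tarr M (Id a) (lu M b) \<cdot> asc M a (munit M) b = tarr M (ru M a) (Id b))"

definition is_monad :: "('o,'m) monad \<Rightarrow> bool" where
  "is_monad T \<longleftrightarrow>
     endofunctor (Tob T) (Tar T) \<and>
     (\<forall>a. mu T a \<in> Hom (Tob T (Tob T a)) (Tob T a)) \<and>
     (\<forall>a. eta T a \<in> Hom a (Tob T a)) \<and>
     (\<forall>a b f. f \<in> Hom a b \<longrightarrow> Tar T f \<cdot> mu T a = mu T b \<cdot> Tar T (Tar T f)) \<and>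
     (\<forall>a b f. f \<in> Hom a b \<longrightarrow> Tar T f \<cdot> eta T a = eta T b \<cdot> f) \<and>
     (\<forall>a. mu T a \<cdot> Tar T (mu T a) = mu T a \<cdot> mu T (Tob T a)) \<and>
     (\<forall>a. mu T a \<cdot> eta T (Tob T a) = Id (Tob T a)) \<and>
     (\<forall>a. mu T a \<cdot> Tar T (eta T a) = Id (Tob T a))"

definition is_bimonad :: "('o,'m) monoidal \<Rightarrow> ('o,'m) monad \<Rightarrow> ('o \<Rightarrow> 'o \<Rightarrow> 'm) \<Rightarrow> 'm \<Rightarrow> bool" where
  "is_bimonad M T T2 T0 \<longleftrightarrow>
     (\<forall>x y. T2 x y \<in> Hom (Tob T (tobj M x y)) (tobj M (Tob T x) (Tob T y))) \<and>
     T0 \<in> Hom (Tob T (munit M)) (munit M) \<and>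
     (\<forall>x x' y y' f g. f \<in> Hom x x' \<longrightarrow> g \<in> Hom y y' \<longrightarrow>
        T2 x' y' \<cdot> Tar T (tarr M f g) = tarr M (Tar T f) (Tar T g) \<cdot> T2 x y) \<and>
     (\<forall>x y z. asc M (Tob T x) (Tob T y) (Tob T z) \<cdot> tarr M (T2 x y) (Id (Tob T z)) \<cdot> T2 (tobj M x y) z =
        tarr M (Id (Tob T x)) (T2 y z) \<cdot> T2 x (tobj M y z) \<cdot> Tar T (asc M x y z)) \<and>
     (\<forall>x. tarr M T0 (Id (Tob T x)) \<cdot> T2 (munit M) x = inv (lu M (Tob T x)) \<cdot> Tar T (lu M x)) \<and>
     (\<forall>x. tarr M (Id (Tob T x)) T0 \<cdot> T2 x (munit M) = inv (ru M (Tob T x)) \<cdot> Tar T (ru M x)) \<and>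
     (\<forall>x y. T2 x y \<cdot> mu T (tobj M x y) =
        tarr M (mu T x) (mu T y) \<cdot> T2 (Tob T x) (Tob T y) \<cdot> Tar T (T2 x y)) \<and>
     T0 \<cdot> mu T (munit M) = T0 \<cdot> Tar T T0 \<and>
     (\<forall>x y. T2 x y \<cdot> eta T (tobj M x y) = tarr M (eta T x) (eta T y)) \<and>
     T0 \<cdot> eta T (munit M) = Id (munit M)"

definition is_alg :: "('o,'m) monad \<Rightarrow> 'o \<times> 'm \<Rightarrow> bool" where
  "is_alg T A \<longleftrightarrow> snd A \<in> Hom (Tob T (fst A)) (fst A) \<and>
     snd A \<cdot> eta T (fst A) = Id (fst A) \<and>
     snd A \<cdot> Tar T (snd A) = snd A \<cdot> mu T (fst A)"

definition alg_hom :: "('o,'m) monad \<Rightarrow> 'o \<times> 'm \<Rightarrow> 'o \<times> 'm \<Rightarrow> 'm \<Rightarrow> bool" where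
  "alg_hom T A B f \<longleftrightarrow> is_alg T A \<and> is_alg T B \<and> f \<in> Hom (fst A) (fst B) \<and>
     f \<cdot> snd A = snd B \<cdot> Tar T f"

definition lift :: "('o,'m) monoidal \<Rightarrow> ('o \<Rightarrow> 'o \<Rightarrow> 'm) \<Rightarrow> 'o \<times> 'm \<Rightarrow> 'o \<times> 'm \<Rightarrow> 'o \<times> 'm" where
  "lift M T2 A B = (tobj M (fst A) (fst B), tarr M (snd A) (snd B) \<cdot> T2 (fst A) (fst B))"

definition is_monoid :: "('o,'m) monoidal \<Rightarrow> 'm \<Rightarrow> 'm \<Rightarrow> 'o \<Rightarrow> bool" where
  "is_monoid M m u x \<longleftrightarrow> m \<in> Hom (tobj M x x) x \<and> u \<in> Hom (munit M) x \<and>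
     m \<cdot> tarr M m (Id x) = m \<cdot> tarr M (Id x) m \<cdot> asc M x x x \<and>
     m \<cdot> tarr M u (Id x) = lu M x \<and>
     m \<cdot> tarr M (Id x) u = ru M x"

definition is_comonoid :: "('o,'m) monoidal \<Rightarrow> 'm \<Rightarrow> 'm \<Rightarrow> 'o \<Rightarrow> bool" where
  "is_comonoid M d e x \<longleftrightarrow> d \<in> Hom x (tobj M x x) \<and> e \<in> Hom x (munit M) \<and>
     asc M x x x \<cdot> tarr M d (Id x) \<cdot> d = tarr M (Id x) d \<cdot> d \<and>
     tarr M e (Id x) \<cdot> d = inv (lu M x) \<and>
     tarr M (Id x) e \<cdot> d = inv (ru M x)"

end

text \<open>Context: category C, circ-structure Mo = (o, bot), bullet-structure Mb = (., 1),
  monad T with bimonad structures (To2, To0) for Mo and (Tb2, Tb0) for Mb.\<close>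

locale duo_ctx = cat_ctx C
  for C :: "('o,'m) cat" +
  fixes Mo :: "('o,'m) monoidal" and Mb :: "('o,'m) monoidal"
    and T :: "('o,'m) monad"
    and To2 :: "'o \<Rightarrow> 'o \<Rightarrow> 'm" and To0 :: "'m"
    and Tb2 :: "'o \<Rightarrow> 'o \<Rightarrow> 'm" and Tb0 :: "'m"
begin

abbreviation oo where "oo \<equiv> tobj Mo"
abbreviation om where "om \<equiv> tarr Mo"
abbreviation bo where "bo \<equiv> tobj Mb"
abbreviation bm where "bm \<equiv> tarr Mb"
abbreviation bot where "bot \<equiv> munit Mo"
abbreviation one where "one \<equiv> munit Mb"
abbreviation To where "To \<equiv> Tob T"
abbreviation Tm where "Tm \<equiv> Tar T"
abbreviation botA where "botA \<equiv> (bot, To0)"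
abbreviation oneA where "oneA \<equiv> (one, Tb0)"
abbreviation liftO where "liftO \<equiv> lift Mo To2"
abbreviation liftB where "liftB \<equiv> lift Mb Tb2"
abbreviation free where "free a \<equiv> (Tob T a, mu T a)"

definition preduoidal :: bool where
  "preduoidal \<longleftrightarrow> category \<and> is_monoidal Mo \<and> is_monoidal Mb"

definition sep_opmonoidal_monad :: bool where
  "sep_opmonoidal_monad \<longleftrightarrow> is_monad T \<and> is_bimonad Mo T To2 To0 \<and> is_bimonad Mb T Tb2 Tb0"

definition unit_data :: "'m \<Rightarrow> 'm \<Rightarrow> 'm \<Rightarrow> bool" where
  "unit_data nu varpi iota \<longleftrightarrow>
     alg_hom T botA (liftB botA botA) nu \<and>
     alg_hom T (liftO oneA oneA) oneA varpi \<and>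
     alg_hom T botA oneA iota \<and>
     is_monoid Mo varpi iota one \<and>
     is_comonoid Mb nu iota bot"

definition duoidal_EM :: "('o \<times> 'm \<Rightarrow> 'o \<times> 'm \<Rightarrow> 'o \<times> 'm \<Rightarrow> 'o \<times> 'm \<Rightarrow> 'm) \<Rightarrow> 'm \<Rightarrow> 'm \<Rightarrow> 'm \<Rightarrow> bool" where
  "duoidal_EM xi nu varpi iota \<longleftrightarrow>
     unit_data nu varpi iota \<and>
     (\<forall>X Y A B. is_alg T X \<longrightarrow> is_alg T Y \<longrightarrow> is_alg T A \<longrightarrow> is_alg T B \<longrightarrow>
        alg_hom T (liftO (liftB X Y) (liftB A B)) (liftB (liftO X A) (liftO Y B)) (xi X Y A B)) \<and>
     (\<forall>X X' Y Y' A A' B B' f g h k.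
        alg_hom T X X' f \<longrightarrow> alg_hom T Y Y' g \<longrightarrow> alg_hom T A A' h \<longrightarrow> alg_hom T B B' k \<longrightarrow>
        xi X' Y' A' B' \<cdot> om (bm f g) (bm h k) = bm (om f h) (om g k) \<cdot> xi X Y A B) \<and>
     (\<forall>X Y A B Cc D. is_alg T X \<longrightarrow> is_alg T Y \<longrightarrow> is_alg T A \<longrightarrow> is_alg T B \<longrightarrow>
        is_alg T Cc \<longrightarrow> is_alg T D \<longrightarrow>
        bm (asc Mo (fst X) (fst A) (fst Cc)) (asc Mo (fst Y) (fst B) (fst D))
          \<cdot> xi (liftO X A) (liftO Y B) Cc D \<cdot> om (xi X Y A B) (Id (bo (fst Cc) (fst D)))
        = xi X Y (liftO A Cc) (liftO B D) \<cdot> om (Id (bo (fst X) (fst Y))) (xi A B Cc D)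
          \<cdot> asc Mo (bo (fst X) (fst Y)) (bo (fst A) (fst B)) (bo (fst Cc) (fst D))) \<and>
     (\<forall>X A Cc Y B D. is_alg T X \<longrightarrow> is_alg T Y \<longrightarrow> is_alg T A \<longrightarrow> is_alg T B \<longrightarrow>
        is_alg T Cc \<longrightarrow> is_alg T D \<longrightarrow>
        asc Mb (oo (fst X) (fst Y)) (oo (fst A) (fst B)) (oo (fst Cc) (fst D))
          \<cdot> bm (xi X A Y B) (Id (oo (fst Cc) (fst D))) \<cdot> xi (liftB X A) Cc (liftB Y B) D
        = bm (Id (oo (fst X) (fst Y))) (xi A Cc B D) \<cdot> xi X (liftB A Cc) Y (liftB B D)
          \<cdot> om (asc Mb (fst X) (fst A) (fst Cc)) (asc Mb (fst Y) (fst B) (fst D))) \<and>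
     (\<forall>A B. is_alg T A \<longrightarrow> is_alg T B \<longrightarrow>
        xi botA botA A B \<cdot> om nu (Id (bo (fst A) (fst B)))
          = bm (inv (lu Mo (fst A))) (inv (lu Mo (fst B))) \<cdot> lu Mo (bo (fst A) (fst B)) \<and>
        xi A B botA botA \<cdot> om (Id (bo (fst A) (fst B))) nu
          = bm (inv (ru Mo (fst A))) (inv (ru Mo (fst B))) \<cdot> ru Mo (bo (fst A) (fst B)) \<and>
        bm varpi (Id (oo (fst A) (fst B))) \<cdot> xi oneA A oneA B
          = inv (lu Mb (oo (fst A) (fst B))) \<cdot> om (lu Mb (fst A)) (lu Mb (fst B)) \<and>
        bm (Id (oo (fst A) (fst B))) varpi \<cdot> xi A oneA B oneA
          = inv (ru Mb (oo (fst A) (fst B))) \<cdot> om (ru Mb (fst A)) (ru Mb (fst B)))"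

text \<open>R-matrix (R, nu, varpi, iota) on the separately opmonoidal monad T
  (associators inserted explicitly)\<close>

definition rmatrix :: "('o \<Rightarrow> 'o \<Rightarrow> 'o \<Rightarrow> 'o \<Rightarrow> 'm) \<Rightarrow> 'm \<Rightarrow> 'm \<Rightarrow> 'm \<Rightarrow> bool" where
  "rmatrix R nu varpi iota \<longleftrightarrow>
     unit_data nu varpi iota \<and>
     (\<forall>a b c d. R a b c d \<in> Hom (oo (bo a b) (bo c d)) (bo (oo (To a) (To c)) (oo (To b) (To d)))) \<and>
     (\<forall>a a' b b' c c' d d' f g h k.
        f \<in> Hom a a' \<longrightarrow> g \<in> Hom b b' \<longrightarrow> h \<in> Hom c c' \<longrightarrow> k \<in> Hom d d' \<longrightarrow>
        R a' b' c' d' \<cdot> om (bm f g) (bm h k) = bm (om (Tm f) (Tm h)) (om (Tm g) (Tm k)) \<cdot> R a b c d) \<and>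
     \<comment> \<open>R-unit\<close>
     (\<forall>A B. is_alg T A \<longrightarrow> is_alg T B \<longrightarrow>
        bm (om To0 (snd A)) (om To0 (snd B)) \<cdot> R bot bot (fst A) (fst B) \<cdot> om nu (Id (bo (fst A) (fst B)))
          = bm (inv (lu Mo (fst A))) (inv (lu Mo (fst B))) \<cdot> lu Mo (bo (fst A) (fst B)) \<and>
        bm (om (snd A) To0) (om (snd B) To0) \<cdot> R (fst A) (fst B) bot bot \<cdot> om (Id (bo (fst A) (fst B))) nu
          = bm (inv (ru Mo (fst A))) (inv (ru Mo (fst B))) \<cdot> ru Mo (bo (fst A) (fst B)) \<and>
        bm varpi (Id (oo (fst A) (fst B))) \<cdot> bm (om Tb0 Tb0) (om (snd A) (snd B)) \<cdot> R one (fst A) one (fst B)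
          = inv (lu Mb (oo (fst A) (fst B))) \<cdot> om (lu Mb (fst A)) (lu Mb (fst B)) \<and>
        bm (Id (oo (fst A) (fst B))) varpi \<cdot> bm (om (snd A) (snd B)) (om Tb0 Tb0) \<cdot> R (fst A) one (fst B) one
          = inv (ru Mb (oo (fst A) (fst B))) \<cdot> om (ru Mb (fst A)) (ru Mb (fst B))) \<and>
     \<comment> \<open>R-lift\<close>
     (\<forall>a b c d.
        bm (om (mu T a) (mu T c)) (om (mu T b) (mu T d)) \<cdot> R (To a) (To b) (To c) (To d)
          \<cdot> om (Tb2 a b) (Tb2 c d) \<cdot> To2 (bo a b) (bo c d)
        = bm (om (mu T a) (mu T c)) (om (mu T b) (mu T d))
          \<cdot> bm (To2 (To a) (To c)) (To2 (To b) (To d)) \<cdot> Tb2 (oo (To a) (To c)) (oo (To b) (To d))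
          \<cdot> Tm (R a b c d)) \<and>
     \<comment> \<open>R-1\<close>
     (\<forall>a b c d x y.
        bm (asc Mo (To a) (To c) (To x)) (asc Mo (To b) (To d) (To y))
          \<cdot> bm (om (om (mu T a) (mu T c)) (Id (To x))) (om (om (mu T b) (mu T d)) (Id (To y)))
          \<cdot> bm (om (To2 (To a) (To c)) (Id (To x))) (om (To2 (To b) (To d)) (Id (To y)))
          \<cdot> R (oo (To a) (To c)) (oo (To b) (To d)) x y \<cdot> om (R a b c d) (Id (bo x y))
        = bm (om (Id (To a)) (om (mu T c) (mu T x))) (om (Id (To b)) (om (mu T d) (mu T y)))
          \<cdot> bm (om (Id (To a)) (To2 (To c) (To x))) (om (Id (To b)) (To2 (To d) (To y)))
          \<cdot> R a b (oo (To c) (To x)) (oo (To d) (To y)) \<cdot> om (Id (bo a b)) (R c d x y)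
          \<cdot> asc Mo (bo a b) (bo c d) (bo x y)) \<and>
     \<comment> \<open>R-2\<close>
     (\<forall>x a c y b d.
        asc Mb (oo (To x) (To y)) (oo (To a) (To b)) (oo (To c) (To d))
          \<cdot> bm (bm (om (mu T x) (mu T y)) (om (mu T a) (mu T b))) (Id (oo (To c) (To d)))
          \<cdot> bm (R (To x) (To a) (To y) (To b)) (Id (oo (To c) (To d)))
          \<cdot> bm (om (Tb2 x a) (Tb2 y b)) (Id (oo (To c) (To d)))
          \<cdot> R (bo x a) c (bo y b) d
        = bm (Id (oo (To x) (To y))) (bm (om (mu T a) (mu T b)) (om (mu T c) (mu T d)))
          \<cdot> bm (Id (oo (To x) (To y))) (R (To a) (To c) (To b) (To d))
          \<cdot> bm (Id (oo (To x) (To y))) (om (Tb2 a c) (Tb2 b d))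
          \<cdot> R x (bo a c) y (bo b d)
          \<cdot> om (asc Mb x a c) (asc Mb y b d))"

definition xi_of :: "('o \<Rightarrow> 'o \<Rightarrow> 'o \<Rightarrow> 'o \<Rightarrow> 'm) \<Rightarrow> 'o \<times> 'm \<Rightarrow> 'o \<times> 'm \<Rightarrow> 'o \<times> 'm \<Rightarrow> 'o \<times> 'm \<Rightarrow> 'm" where
  "xi_of R X Y A B = bm (om (snd X) (snd A)) (om (snd Y) (snd B)) \<cdot> R (fst X) (fst Y) (fst A) (fst B)"

definition R_of :: "('o \<times> 'm \<Rightarrow> 'o \<times> 'm \<Rightarrow> 'o \<times> 'm \<Rightarrow> 'o \<times> 'm \<Rightarrow> 'm) \<Rightarrow> 'o \<Rightarrow> 'o \<Rightarrow> 'o \<Rightarrow> 'o \<Rightarrow> 'm" where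
  "R_of xi a b c d = xi (free a) (free b) (free c) (free d) \<cdot> om (bm (eta T a) (eta T b)) (bm (eta T c) (eta T d))"

end

end

theory Submission
  imports Defs
begin

locale duo_thy = duo_ctx +
  assumes pre: "preduoidal" and som: "sep_opmonoidal_monad"
begin

lemma cat: category using pre unfolding preduoidal_def by auto
lemma monO: "is_monoidal Mo" using pre unfolding preduoidal_def by auto
lemma monB: "is_monoidal Mb" using pre unfolding preduoidal_def by auto
lemma mon: "is_monad T" using som unfolding sep_opmonoidal_monad_def by auto
lemma bimO: "is_bimonad Mo T To2 To0" using som unfolding sep_opmonoidal_monad_def by auto
lemma bimB: "is_bimonad Mb T Tb2 Tb0" using som unfolding sep_opmonoidal_monad_def by auto

lemma Hom_iff: "f \<in> Hom a b \<longleftrightarrow> f \<in> arr C \<and> dm C f = a \<and> cd C f = b"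
  unfolding Hom_def by auto

lemma comp_simps[simp]:
  assumes "f \<in> arr C" "g \<in> arr C" "dm C g = cd C f"
  shows "g \<cdot> f \<in> arr C" "dm C (g \<cdot> f) = dm C f" "cd C (g \<cdot> f) = cd C g"
proof -
  have "g \<cdot> f \<in> Hom (dm C f) (cd C g)" using cat assms unfolding category_def Hom_iff
    by metis
  thus "g \<cdot> f \<in> arr C" "dm C (g \<cdot> f) = dm C f" "cd C (g \<cdot> f) = cd C g" by (auto simp: Hom_iff)
qed

lemma assoc[simp]:
  assumes "f \<in> arr C" "g \<in> arr C" "h \<in> arr C" "dm C g = cd C f" "dm C h = cd C g"
  shows "(h \<cdot> g) \<cdot> f = h \<cdot> g \<cdot> f"
  using cat assms unfolding category_def Hom_iff by metis

lemma id_simps[simp]: "Id a \<in> arr C" "dm C (Id a) = a" "cd C (Id a) = a"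
  using cat unfolding category_def Hom_iff by auto

lemma comp_id[simp]: "f \<in> arr C \<Longrightarrow> dm C f = a \<Longrightarrow> f \<cdot> Id a = f"
  using cat unfolding category_def Hom_iff by auto
lemma id_comp[simp]: "f \<in> arr C \<Longrightarrow> cd C f = a \<Longrightarrow> Id a \<cdot> f = f"
  using cat unfolding category_def Hom_iff by auto



lemma tarr_simps:
  assumes M: "is_monoidal M" and "f \<in> arr C" "g \<in> arr C"
  shows "tarr M f g \<in> arr C" "dm C (tarr M f g) = tobj M (dm C f) (dm C g)"
    "cd C (tarr M f g) = tobj M (cd C f) (cd C g)"
proof -
  have "f \<in> Hom (dm C f) (cd C f)" "g \<in> Hom (dm C g) (cd C g)" using assms by (auto simp: Hom_iff)
  hence "tarr M f g \<in> Hom (tobj M (dm C f) (dm C g)) (tobj M (cd C f) (cd C g))"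
    using M[unfolded is_monoidal_def, THEN conjunct1] by blast
  thus "tarr M f g \<in> arr C" "dm C (tarr M f g) = tobj M (dm C f) (dm C g)"
    "cd C (tarr M f g) = tobj M (cd C f) (cd C g)" by (auto simp: Hom_iff)
qed

lemma tarr_id: assumes M: "is_monoidal M" shows "tarr M (Id a) (Id b) = Id (tobj M a b)"
  using M[unfolded is_monoidal_def, THEN conjunct2, THEN conjunct1] by blast

lemma merge:
  assumes M: "is_monoidal M" and "f \<in> arr C" "g \<in> arr C" "f' \<in> arr C" "g' \<in> arr C"
    "dm C f' = cd C f" "dm C g' = cd C g"
  shows "tarr M f' g' \<cdot> tarr M f g = tarr M (f' \<cdot> f) (g' \<cdot> g)"
proof -
  have "f \<in> Hom (dm C f) (cd C f)" "f' \<in> Hom (cd C f) (cd C f')"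
       "g \<in> Hom (dm C g) (cd C g)" "g' \<in> Hom (cd C g) (cd C g')"
    using assms by (auto simp: Hom_iff)
  thus ?thesis using M[unfolded is_monoidal_def, THEN conjunct2, THEN conjunct2, THEN conjunct1] by metis
qed

lemma merge_tail:
  assumes M: "is_monoidal M" and "f \<in> arr C" "g \<in> arr C" "f' \<in> arr C" "g' \<in> arr C"
    "dm C f' = cd C f" "dm C g' = cd C g" "e \<in> arr C" "cd C e = tobj M (dm C f) (dm C g)"
  shows "tarr M f' g' \<cdot> tarr M f g \<cdot> e = tarr M (f' \<cdot> f) (g' \<cdot> g) \<cdot> e"
proof -
  have "tarr M f' g' \<cdot> tarr M f g \<cdot> e = (tarr M f' g' \<cdot> tarr M f g) \<cdot> e"
    apply (rule sym, rule assoc) using assms tarr_simps[OF M] by auto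
  thus ?thesis using merge[OF assms(1-7)] by simp
qed

lemma asc_simps:
  assumes M: "is_monoidal M"
  shows "asc M a b c \<in> arr C" "dm C (asc M a b c) = tobj M (tobj M a b) c"
    "cd C (asc M a b c) = tobj M a (tobj M b c)"
  using M[unfolded is_monoidal_def, THEN conjunct2, THEN conjunct2, THEN conjunct2, THEN conjunct1] unfolding Hom_iff by blast+

lemma asc_nat:
  assumes M: "is_monoidal M" and "f \<in> arr C" "g \<in> arr C" "h \<in> arr C"
  shows "asc M (cd C f) (cd C g) (cd C h) \<cdot> tarr M (tarr M f g) h
     = tarr M f (tarr M g h) \<cdot> asc M (dm C f) (dm C g) (dm C h)"
proof -
  have "f \<in> Hom (dm C f) (cd C f)" "g \<in> Hom (dm C g) (cd C g)" "h \<in> Hom (dm C h) (cd C h)"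
    using assms by (auto simp: Hom_iff)
  thus ?thesis using M[unfolded is_monoidal_def, THEN conjunct2, THEN conjunct2, THEN conjunct2, THEN conjunct2, THEN conjunct1] by blast
qed

lemmas tO = tarr_simps[OF monO] asc_simps[OF monO] tarr_id[OF monO]
lemmas tB = tarr_simps[OF monB] asc_simps[OF monB] tarr_id[OF monB]
lemmas mergeO = merge[OF monO] merge_tail[OF monO]
lemmas mergeB = merge[OF monB] merge_tail[OF monB]
declare tO[simp] tB[simp]

lemma T_simps[simp]:
  assumes "f \<in> arr C"
  shows "Tm f \<in> arr C" "dm C (Tm f) = To (dm C f)" "cd C (Tm f) = To (cd C f)"
proof -
  have "f \<in> Hom (dm C f) (cd C f)" using assms by (auto simp: Hom_iff)
  hence "Tm f \<in> Hom (To (dm C f)) (To (cd C f))" using mon[unfolded is_monad_def, THEN conjunct1, unfolded endofunctor_def, THEN conjunct1] by blast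
  thus "Tm f \<in> arr C" "dm C (Tm f) = To (dm C f)" "cd C (Tm f) = To (cd C f)" by (auto simp: Hom_iff)
qed

lemma T_id[simp]: "Tm (Id a) = Id (To a)"
  using mon[unfolded is_monad_def, THEN conjunct1, unfolded endofunctor_def, THEN conjunct2, THEN conjunct1] by blast

lemma T_comp[simp]:
  assumes "f \<in> arr C" "g \<in> arr C" "dm C g = cd C f"
  shows "Tm (g \<cdot> f) = Tm g \<cdot> Tm f"
proof -
  have "f \<in> Hom (dm C f) (cd C f)" "g \<in> Hom (cd C f) (cd C g)" using assms by (auto simp: Hom_iff)
  thus ?thesis using mon[unfolded is_monad_def, THEN conjunct1, unfolded endofunctor_def, THEN conjunct2, THEN conjunct2] by blast
qed

lemma mu_simps[simp]: "mu T a \<in> arr C" "dm C (mu T a) = To (To a)" "cd C (mu T a) = To a"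
  using mon[unfolded is_monad_def, THEN conjunct2, THEN conjunct1] unfolding Hom_iff by blast+
lemma eta_simps[simp]: "eta T a \<in> arr C" "dm C (eta T a) = a" "cd C (eta T a) = To a"
  using mon[unfolded is_monad_def, THEN conjunct2, THEN conjunct2, THEN conjunct1] unfolding Hom_iff by blast+

lemma mu_nat: "f \<in> arr C \<Longrightarrow> Tm f \<cdot> mu T (dm C f) = mu T (cd C f) \<cdot> Tm (Tm f)"
  using mon[unfolded is_monad_def, THEN conjunct2, THEN conjunct2, THEN conjunct2, THEN conjunct1] unfolding Hom_iff by blast
lemma eta_nat: "f \<in> arr C \<Longrightarrow> Tm f \<cdot> eta T (dm C f) = eta T (cd C f) \<cdot> f"
  using mon[unfolded is_monad_def, THEN conjunct2, THEN conjunct2, THEN conjunct2, THEN conjunct2, THEN conjunct1] unfolding Hom_iff by blast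
lemma mu_assoc: "mu T a \<cdot> Tm (mu T a) = mu T a \<cdot> mu T (To a)"
  using mon[unfolded is_monad_def, THEN conjunct2, THEN conjunct2, THEN conjunct2, THEN conjunct2, THEN conjunct2, THEN conjunct1] by blast
lemma mu_eta1[simp]: "mu T a \<cdot> eta T (To a) = Id (To a)"
  using mon[unfolded is_monad_def, THEN conjunct2, THEN conjunct2, THEN conjunct2, THEN conjunct2, THEN conjunct2, THEN conjunct2, THEN conjunct1] by blast
lemma mu_eta2[simp]: "mu T a \<cdot> Tm (eta T a) = Id (To a)"
  using mon[unfolded is_monad_def, THEN conjunct2, THEN conjunct2, THEN conjunct2, THEN conjunct2, THEN conjunct2, THEN conjunct2, THEN conjunct2] by blast


context
  fixes M T2 T0 assumes M: "is_monoidal M" and B: "is_bimonad M T T2 T0"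
begin

lemma T2_simps[simp]: "T2 x y \<in> arr C" "dm C (T2 x y) = To (tobj M x y)"
    "cd C (T2 x y) = tobj M (To x) (To y)"
  using B[unfolded is_bimonad_def, THEN conjunct1] unfolding Hom_iff by blast+
lemma T0_simps[simp]: "T0 \<in> arr C" "dm C T0 = To (munit M)" "cd C T0 = munit M"
  using B[unfolded is_bimonad_def, THEN conjunct2, THEN conjunct1] unfolding Hom_iff by blast+
lemma T2_nat: "f \<in> arr C \<Longrightarrow> g \<in> arr C \<Longrightarrow>
   T2 (cd C f) (cd C g) \<cdot> Tm (tarr M f g) = tarr M (Tm f) (Tm g) \<cdot> T2 (dm C f) (dm C g)"
  using B[unfolded is_bimonad_def, THEN conjunct2, THEN conjunct2, THEN conjunct1] unfolding Hom_iff by blast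
lemma T2_mu: "T2 x y \<cdot> mu T (tobj M x y) = tarr M (mu T x) (mu T y) \<cdot> T2 (To x) (To y) \<cdot> Tm (T2 x y)"
  using B[unfolded is_bimonad_def, THEN conjunct2, THEN conjunct2, THEN conjunct2, THEN conjunct2, THEN conjunct2, THEN conjunct2, THEN conjunct1] by blast
lemma T0_mu: "T0 \<cdot> mu T (munit M) = T0 \<cdot> Tm T0"
  using B[unfolded is_bimonad_def, THEN conjunct2, THEN conjunct2, THEN conjunct2, THEN conjunct2, THEN conjunct2, THEN conjunct2, THEN conjunct2, THEN conjunct1] by blast
lemma T2_eta: "T2 x y \<cdot> eta T (tobj M x y) = tarr M (eta T x) (eta T y)"
  using B[unfolded is_bimonad_def, THEN conjunct2, THEN conjunct2, THEN conjunct2, THEN conjunct2, THEN conjunct2, THEN conjunct2, THEN conjunct2, THEN conjunct2, THEN conjunct1] by blast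
lemma T0_eta: "T0 \<cdot> eta T (munit M) = Id (munit M)"
  using B[unfolded is_bimonad_def, THEN conjunct2, THEN conjunct2, THEN conjunct2, THEN conjunct2, THEN conjunct2, THEN conjunct2, THEN conjunct2, THEN conjunct2, THEN conjunct2] by blast

end

lemmas bO = T2_simps[OF monO bimO] T0_simps[OF monO bimO]
lemmas bB = T2_simps[OF monB bimB] T0_simps[OF monB bimB]
declare bO[simp] bB[simp]

section \<open>algebras\<close>

lemma alg_iff: "is_alg T (x, h) \<longleftrightarrow> h \<in> arr C \<and> dm C h = To x \<and> cd C h = x \<and>
   h \<cdot> eta T x = Id x \<and> h \<cdot> Tm h = h \<cdot> mu T x"
  unfolding is_alg_def Hom_iff by auto

lemma alg_hom_iff: "alg_hom T (x, h) (y, k) f \<longleftrightarrow> is_alg T (x, h) \<and> is_alg T (y, k) \<and>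
   f \<in> arr C \<and> dm C f = x \<and> cd C f = y \<and> f \<cdot> h = k \<cdot> Tm f"
  unfolding alg_hom_def Hom_iff by auto

lemma alg_free[simp]: "is_alg T (free a)"
  unfolding alg_iff by (simp add: mu_assoc)

lemma alg_lift:
  assumes M: "is_monoidal M" and B: "is_bimonad M T T2 T0"
    and X: "is_alg T (x, h)" and Y: "is_alg T (y, k)"
  shows "is_alg T (lift M T2 (x, h) (y, k))"
proof -
  have [simp]: "h \<in> arr C" "dm C h = To x" "cd C h = x" "k \<in> arr C" "dm C k = To y" "cd C k = y"
    using X Y unfolding alg_iff by auto
  note s = tarr_simps[OF M] T2_simps[OF M B]
  have "tarr M h k \<cdot> T2 x y \<cdot> eta T (tobj M x y) = tarr M h k \<cdot> tarr M (eta T x) (eta T y)"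
    by (simp add: T2_eta[OF M B])
  also have "\<dots> = tarr M (h \<cdot> eta T x) (k \<cdot> eta T y)" by (simp add: merge[OF M] s)
  also have "\<dots> = Id (tobj M x y)" using X Y unfolding alg_iff by (simp add: tarr_id[OF M])
  finally have 1: "tarr M h k \<cdot> T2 x y \<cdot> eta T (tobj M x y) = Id (tobj M x y)" .
  have "(tarr M h k \<cdot> T2 x y) \<cdot> Tm (tarr M h k \<cdot> T2 x y)
      = tarr M h k \<cdot> (T2 x y \<cdot> Tm (tarr M h k)) \<cdot> Tm (T2 x y)" by (simp add: s)
  also have "\<dots> = tarr M h k \<cdot> (tarr M (Tm h) (Tm k) \<cdot> T2 (To x) (To y)) \<cdot> Tm (T2 x y)"
    using T2_nat[OF M B, of h k] by simp
  also have "\<dots> = tarr M (h \<cdot> Tm h) (k \<cdot> Tm k) \<cdot> T2 (To x) (To y) \<cdot> Tm (T2 x y)"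
    by (simp add: s merge_tail[OF M])
  also have "\<dots> = tarr M (h \<cdot> mu T x) (k \<cdot> mu T y) \<cdot> T2 (To x) (To y) \<cdot> Tm (T2 x y)"
    using X Y unfolding alg_iff by simp
  also have "\<dots> = tarr M h k \<cdot> (tarr M (mu T x) (mu T y) \<cdot> T2 (To x) (To y) \<cdot> Tm (T2 x y))"
    by (simp add: s merge_tail[OF M])
  also have "\<dots> = (tarr M h k \<cdot> T2 x y) \<cdot> mu T (tobj M x y)"
    by (simp add: s T2_mu[OF M B])
  finally show ?thesis unfolding lift_def alg_iff fst_conv snd_conv using 1 by (simp add: s)
qed

lemma alg_liftO[simp]: "is_alg T X \<Longrightarrow> is_alg T Y \<Longrightarrow> is_alg T (liftO X Y)"
  using alg_lift[OF monO bimO, of "fst X" "snd X" "fst Y" "snd Y"] by simp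
lemma alg_liftB[simp]: "is_alg T X \<Longrightarrow> is_alg T Y \<Longrightarrow> is_alg T (liftB X Y)"
  using alg_lift[OF monB bimB, of "fst X" "snd X" "fst Y" "snd Y"] by simp

lemma alg_botA[simp]: "is_alg T botA"
  unfolding alg_iff using T0_eta[OF monO bimO] T0_mu[OF monO bimO] by simp
lemma alg_oneA[simp]: "is_alg T oneA"
  unfolding alg_iff using T0_eta[OF monB bimB] T0_mu[OF monB bimB] by simp

lemma lift_simps[simp]: "fst (lift M T2 X Y) = tobj M (fst X) (fst Y)"
   "snd (lift M T2 X Y) = tarr M (snd X) (snd Y) \<cdot> T2 (fst X) (fst Y)"
  unfolding lift_def by auto


lemma ext: "g \<cdot> f = k \<Longrightarrow> f \<in> arr C \<Longrightarrow> g \<in> arr C \<Longrightarrow> dm C g = cd C f \<Longrightarrow>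
  e \<in> arr C \<Longrightarrow> cd C e = dm C f \<Longrightarrow> g \<cdot> f \<cdot> e = k \<cdot> e"
  by (metis assoc)

lemma unit_simps:
  assumes "unit_data nu varpi iota"
  shows "nu \<in> arr C" "dm C nu = bot" "cd C nu = bo bot bot"
    "varpi \<in> arr C" "dm C varpi = oo one one" "cd C varpi = one"
    "iota \<in> arr C" "dm C iota = bot" "cd C iota = one"
  using assms unfolding unit_data_def alg_hom_def Hom_iff lift_def by auto

section \<open>Direction 1\<close>

context
  fixes R nu varpi iota assumes rm: "rmatrix R nu varpi iota"
begin

lemma R_simps[simp]: "R a b c d \<in> arr C" "dm C (R a b c d) = oo (bo a b) (bo c d)"
  "cd C (R a b c d) = bo (oo (To a) (To c)) (oo (To b) (To d))"
  using rm[unfolded rmatrix_def, THEN conjunct2, THEN conjunct1] unfolding Hom_iff by blast+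

lemma R_nat: "f \<in> arr C \<Longrightarrow> g \<in> arr C \<Longrightarrow> h \<in> arr C \<Longrightarrow> k \<in> arr C \<Longrightarrow>
  R (cd C f) (cd C g) (cd C h) (cd C k) \<cdot> om (bm f g) (bm h k)
   = bm (om (Tm f) (Tm h)) (om (Tm g) (Tm k)) \<cdot> R (dm C f) (dm C g) (dm C h) (dm C k)"
  using rm[unfolded rmatrix_def, THEN conjunct2, THEN conjunct2, THEN conjunct1] unfolding Hom_iff by blast


lemma Rlift: "bm (om (mu T a) (mu T c)) (om (mu T b) (mu T d)) \<cdot> R (To a) (To b) (To c) (To d)
          \<cdot> om (Tb2 a b) (Tb2 c d) \<cdot> To2 (bo a b) (bo c d)
        = bm (om (mu T a) (mu T c)) (om (mu T b) (mu T d))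
          \<cdot> bm (To2 (To a) (To c)) (To2 (To b) (To d)) \<cdot> Tb2 (oo (To a) (To c)) (oo (To b) (To d))
          \<cdot> Tm (R a b c d)"
  using rm[unfolded rmatrix_def, THEN conjunct2, THEN conjunct2, THEN conjunct2, THEN conjunct2, THEN conjunct1] by blast

lemma xi_alg_hom:
  assumes X: "is_alg T (x,hx)" and Y: "is_alg T (y,hy)" and A: "is_alg T (a,ha)" and B: "is_alg T (b,hb)"
  shows "alg_hom T (liftO (liftB (x,hx) (y,hy)) (liftB (a,ha) (b,hb)))
     (liftB (liftO (x,hx) (a,ha)) (liftO (y,hy) (b,hb))) (xi_of R (x,hx) (y,hy) (a,ha) (b,hb))"
proof -
  have [simp]: "hx \<in> arr C" "dm C hx = To x" "cd C hx = x" "hx \<cdot> Tm hx = hx \<cdot> mu T x"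
    "hy \<in> arr C" "dm C hy = To y" "cd C hy = y" "hy \<cdot> Tm hy = hy \<cdot> mu T y"
    "ha \<in> arr C" "dm C ha = To a" "cd C ha = a" "ha \<cdot> Tm ha = ha \<cdot> mu T a"
    "hb \<in> arr C" "dm C hb = To b" "cd C hb = b" "hb \<cdot> Tm hb = hb \<cdot> mu T b"
    using X Y A B unfolding alg_iff by auto
  have "(bm (om hx ha) (om hy hb) \<cdot> R x y a b) \<cdot> om (bm hx hy \<cdot> Tb2 x y) (bm ha hb \<cdot> Tb2 a b) \<cdot> To2 (bo x y) (bo a b)
     = bm (om hx ha) (om hy hb) \<cdot> R x y a b \<cdot> om (bm hx hy) (bm ha hb) \<cdot> om (Tb2 x y) (Tb2 a b) \<cdot> To2 (bo x y) (bo a b)"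
    by (simp add: mergeO)
  also have "\<dots> = bm (om hx ha) (om hy hb) \<cdot> bm (om (Tm hx) (Tm ha)) (om (Tm hy) (Tm hb)) \<cdot> R (To x) (To y) (To a) (To b)
       \<cdot> om (Tb2 x y) (Tb2 a b) \<cdot> To2 (bo x y) (bo a b)"
    using R_nat[of hx hy ha hb] ext[OF R_nat[of hx hy ha hb]] by simp
  also have "\<dots> = bm (om hx ha) (om hy hb) \<cdot> bm (om (mu T x) (mu T a)) (om (mu T y) (mu T b)) \<cdot> R (To x) (To y) (To a) (To b)
       \<cdot> om (Tb2 x y) (Tb2 a b) \<cdot> To2 (bo x y) (bo a b)"
    by (simp add: mergeO mergeB)
  also have "\<dots> = bm (om hx ha) (om hy hb) \<cdot> bm (om (mu T x) (mu T a)) (om (mu T y) (mu T b))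
          \<cdot> bm (To2 (To x) (To a)) (To2 (To y) (To b)) \<cdot> Tb2 (oo (To x) (To a)) (oo (To y) (To b))
          \<cdot> Tm (R x y a b)"
    by (simp add: Rlift)
  also have "\<dots> = (bm (om hx ha \<cdot> To2 x a) (om hy hb \<cdot> To2 y b) \<cdot> Tb2 (oo x a) (oo y b)) \<cdot> Tm (bm (om hx ha) (om hy hb) \<cdot> R x y a b)"
  proof -
    have n1: "Tb2 (oo x a) (oo y b) \<cdot> Tm (bm (om hx ha) (om hy hb)) = bm (Tm (om hx ha)) (Tm (om hy hb)) \<cdot> Tb2 (oo (To x) (To a)) (oo (To y) (To b))"
      using T2_nat[OF monB bimB, of "om hx ha" "om hy hb"] by simp
    have n2: "To2 x a \<cdot> Tm (om hx ha) = om (Tm hx) (Tm ha) \<cdot> To2 (To x) (To a)"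
      using T2_nat[OF monO bimO, of hx ha] by simp
    have n3: "To2 y b \<cdot> Tm (om hy hb) = om (Tm hy) (Tm hb) \<cdot> To2 (To y) (To b)"
      using T2_nat[OF monO bimO, of hy hb] by simp
    show ?thesis using ext[OF n1] by (simp add: n1 mergeB mergeO n2 n3 ext[OF n2] ext[OF n3])
  qed
  finally have eq: "(bm (om hx ha) (om hy hb) \<cdot> R x y a b) \<cdot> om (bm hx hy \<cdot> Tb2 x y) (bm ha hb \<cdot> Tb2 a b) \<cdot> To2 (bo x y) (bo a b)
    = (bm (om hx ha \<cdot> To2 x a) (om hy hb \<cdot> To2 y b) \<cdot> Tb2 (oo x a) (oo y b)) \<cdot> Tm (bm (om hx ha) (om hy hb) \<cdot> R x y a b)" .
  show ?thesis unfolding alg_hom_def Hom_iff using eq X Y A B by (simp add: xi_of_def)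
qed


lemma R1: "bm (asc Mo (To a) (To c) (To x)) (asc Mo (To b) (To d) (To y))
          \<cdot> bm (om (om (mu T a) (mu T c)) (Id (To x))) (om (om (mu T b) (mu T d)) (Id (To y)))
          \<cdot> bm (om (To2 (To a) (To c)) (Id (To x))) (om (To2 (To b) (To d)) (Id (To y)))
          \<cdot> R (oo (To a) (To c)) (oo (To b) (To d)) x y \<cdot> om (R a b c d) (Id (bo x y))
        = bm (om (Id (To a)) (om (mu T c) (mu T x))) (om (Id (To b)) (om (mu T d) (mu T y)))
          \<cdot> bm (om (Id (To a)) (To2 (To c) (To x))) (om (Id (To b)) (To2 (To d) (To y)))
          \<cdot> R a b (oo (To c) (To x)) (oo (To d) (To y)) \<cdot> om (Id (bo a b)) (R c d x y)
          \<cdot> asc Mo (bo a b) (bo c d) (bo x y)"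
  using rm[unfolded rmatrix_def, THEN conjunct2, THEN conjunct2, THEN conjunct2, THEN conjunct2, THEN conjunct2, THEN conjunct1] by blast

lemma R2: "asc Mb (oo (To x) (To y)) (oo (To a) (To b)) (oo (To c) (To d))
          \<cdot> bm (bm (om (mu T x) (mu T y)) (om (mu T a) (mu T b))) (Id (oo (To c) (To d)))
          \<cdot> bm (R (To x) (To a) (To y) (To b)) (Id (oo (To c) (To d)))
          \<cdot> bm (om (Tb2 x a) (Tb2 y b)) (Id (oo (To c) (To d)))
          \<cdot> R (bo x a) c (bo y b) d
        = bm (Id (oo (To x) (To y))) (bm (om (mu T a) (mu T b)) (om (mu T c) (mu T d)))
          \<cdot> bm (Id (oo (To x) (To y))) (R (To a) (To c) (To b) (To d))
          \<cdot> bm (Id (oo (To x) (To y))) (om (Tb2 a c) (Tb2 b d))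
          \<cdot> R x (bo a c) y (bo b d)
          \<cdot> om (asc Mb x a c) (asc Mb y b d)"
  using rm[unfolded rmatrix_def, THEN conjunct2, THEN conjunct2, THEN conjunct2, THEN conjunct2, THEN conjunct2, THEN conjunct2] by blast

lemma xi_nat:
  assumes "alg_hom T (x,hx) (x',hx') f" "alg_hom T (y,hy) (y',hy') g"
    "alg_hom T (a,ha) (a',ha') h" "alg_hom T (b,hb) (b',hb') k"
  shows "xi_of R (x',hx') (y',hy') (a',ha') (b',hb') \<cdot> om (bm f g) (bm h k)
     = bm (om f h) (om g k) \<cdot> xi_of R (x,hx) (y,hy) (a,ha) (b,hb)"
proof -
  have [simp]:
    "hx \<in> arr C" "dm C hx = To x" "cd C hx = x" "hx \<cdot> Tm hx = hx \<cdot> mu T x"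
    "hy \<in> arr C" "dm C hy = To y" "cd C hy = y" "hy \<cdot> Tm hy = hy \<cdot> mu T y"
    "ha \<in> arr C" "dm C ha = To a" "cd C ha = a" "ha \<cdot> Tm ha = ha \<cdot> mu T a"
    "hb \<in> arr C" "dm C hb = To b" "cd C hb = b" "hb \<cdot> Tm hb = hb \<cdot> mu T b"
    "hx' \<in> arr C" "dm C hx' = To x'" "cd C hx' = x'" "hx' \<cdot> Tm hx' = hx' \<cdot> mu T x'"
    "hy' \<in> arr C" "dm C hy' = To y'" "cd C hy' = y'" "hy' \<cdot> Tm hy' = hy' \<cdot> mu T y'"
    "ha' \<in> arr C" "dm C ha' = To a'" "cd C ha' = a'" "ha' \<cdot> Tm ha' = ha' \<cdot> mu T a'"
    "hb' \<in> arr C" "dm C hb' = To b'" "cd C hb' = b'" "hb' \<cdot> Tm hb' = hb' \<cdot> mu T b'"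
    "f \<in> arr C" "dm C f = x" "cd C f = x'" "hx' \<cdot> Tm f = f \<cdot> hx"
    "g \<in> arr C" "dm C g = y" "cd C g = y'" "hy' \<cdot> Tm g = g \<cdot> hy"
    "h \<in> arr C" "dm C h = a" "cd C h = a'" "ha' \<cdot> Tm h = h \<cdot> ha"
    "k \<in> arr C" "dm C k = b" "cd C k = b'" "hb' \<cdot> Tm k = k \<cdot> hb"
    using assms unfolding alg_hom_iff alg_iff by auto
  show ?thesis unfolding xi_of_def fst_conv snd_conv
    using R_nat[of f g h k] by (simp add: mergeO mergeB)
qed

lemma xi_A1:
  assumes "is_alg T (x,hx)" "is_alg T (y,hy)" "is_alg T (a,ha)" "is_alg T (b,hb)" "is_alg T (c,hc)" "is_alg T (d,hdd)"
  shows "bm (asc Mo x a c) (asc Mo y b d)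
          \<cdot> xi_of R (liftO (x,hx) (a,ha)) (liftO (y,hy) (b,hb)) (c,hc) (d,hdd) \<cdot> om (xi_of R (x,hx) (y,hy) (a,ha) (b,hb)) (Id (bo c d))
        = xi_of R (x,hx) (y,hy) (liftO (a,ha) (c,hc)) (liftO (b,hb) (d,hdd)) \<cdot> om (Id (bo x y)) (xi_of R (a,ha) (b,hb) (c,hc) (d,hdd))
          \<cdot> asc Mo (bo x y) (bo a b) (bo c d)"
proof -
  have [simp]:
    "hx \<in> arr C" "dm C hx = To x" "cd C hx = x" "hx \<cdot> Tm hx = hx \<cdot> mu T x"
    "hy \<in> arr C" "dm C hy = To y" "cd C hy = y" "hy \<cdot> Tm hy = hy \<cdot> mu T y"
    "ha \<in> arr C" "dm C ha = To a" "cd C ha = a" "ha \<cdot> Tm ha = ha \<cdot> mu T a"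
    "hb \<in> arr C" "dm C hb = To b" "cd C hb = b" "hb \<cdot> Tm hb = hb \<cdot> mu T b"
    "hc \<in> arr C" "dm C hc = To c" "cd C hc = c" "hc \<cdot> Tm hc = hc \<cdot> mu T c"
    "hdd \<in> arr C" "dm C hdd = To d" "cd C hdd = d" "hdd \<cdot> Tm hdd = hdd \<cdot> mu T d"
    using assms unfolding alg_iff by auto
  have n1: "To2 x a \<cdot> Tm (om hx ha) = om (Tm hx) (Tm ha) \<cdot> To2 (To x) (To a)"
    using T2_nat[OF monO bimO, of hx ha] by simp
  have n2: "To2 y b \<cdot> Tm (om hy hb) = om (Tm hy) (Tm hb) \<cdot> To2 (To y) (To b)"
    using T2_nat[OF monO bimO, of hy hb] by simp
  have n3: "To2 a c \<cdot> Tm (om ha hc) = om (Tm ha) (Tm hc) \<cdot> To2 (To a) (To c)"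
    using T2_nat[OF monO bimO, of ha hc] by simp
  have n4: "To2 b d \<cdot> Tm (om hb hdd) = om (Tm hb) (Tm hdd) \<cdot> To2 (To b) (To d)"
    using T2_nat[OF monO bimO, of hb hdd] by simp
  have Rn1: "R (oo x a) (oo y b) c d \<cdot> om (bm (om hx ha) (om hy hb)) (Id (bo c d))
    = bm (om (Tm (om hx ha)) (Id (To c))) (om (Tm (om hy hb)) (Id (To d))) \<cdot> R (oo (To x) (To a)) (oo (To y) (To b)) c d"
    using R_nat[of "om hx ha" "om hy hb" "Id c" "Id d"] by simp
  have Rn2: "R x y (oo a c) (oo b d) \<cdot> om (Id (bo x y)) (bm (om ha hc) (om hb hdd))
    = bm (om (Id (To x)) (Tm (om ha hc))) (om (Id (To y)) (Tm (om hb hdd))) \<cdot> R x y (oo (To a) (To c)) (oo (To b) (To d))"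
    using R_nat[of "Id x" "Id y" "om ha hc" "om hb hdd"] by simp
  have P1: "bm (om (om hx ha \<cdot> To2 x a) hc) (om (om hy hb \<cdot> To2 y b) hdd)
      \<cdot> bm (om (Tm (om hx ha)) (Id (To c))) (om (Tm (om hy hb)) (Id (To d)))
    = bm (om (om hx ha) hc) (om (om hy hb) hdd)
      \<cdot> bm (om (om (mu T x) (mu T a)) (Id (To c))) (om (om (mu T y) (mu T b)) (Id (To d)))
      \<cdot> bm (om (To2 (To x) (To a)) (Id (To c))) (om (To2 (To y) (To b)) (Id (To d)))"
    by (simp add: mergeO mergeB n1 n2 ext[OF n1] ext[OF n2])
  have P2: "bm (asc Mo x a c) (asc Mo y b d) \<cdot> bm (om (om hx ha) hc) (om (om hy hb) hdd)
     = bm (om hx (om ha hc)) (om hy (om hb hdd)) \<cdot> bm (asc Mo (To x) (To a) (To c)) (asc Mo (To y) (To b) (To d))"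
    using asc_nat[OF monO, of hx ha hc] asc_nat[OF monO, of hy hb hdd] by (simp add: mergeB)
  have P3: "bm (om hx (om ha hc \<cdot> To2 a c)) (om hy (om hb hdd \<cdot> To2 b d))
      \<cdot> bm (om (Id (To x)) (Tm (om ha hc))) (om (Id (To y)) (Tm (om hb hdd)))
    = bm (om hx (om ha hc)) (om hy (om hb hdd))
      \<cdot> bm (om (Id (To x)) (om (mu T a) (mu T c))) (om (Id (To y)) (om (mu T b) (mu T d)))
      \<cdot> bm (om (Id (To x)) (To2 (To a) (To c))) (om (Id (To y)) (To2 (To b) (To d)))"
    by (simp add: mergeO mergeB n3 n4 ext[OF n3] ext[OF n4])
  have "bm (asc Mo x a c) (asc Mo y b d)
        \<cdot> (bm (om (om hx ha \<cdot> To2 x a) hc) (om (om hy hb \<cdot> To2 y b) hdd) \<cdot> R (oo x a) (oo y b) c d)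
        \<cdot> om (bm (om hx ha) (om hy hb) \<cdot> R x y a b) (Id (bo c d))
     = bm (asc Mo x a c) (asc Mo y b d)
        \<cdot> bm (om (om hx ha \<cdot> To2 x a) hc) (om (om hy hb \<cdot> To2 y b) hdd) \<cdot> R (oo x a) (oo y b) c d
        \<cdot> om (bm (om hx ha) (om hy hb)) (Id (bo c d)) \<cdot> om (R x y a b) (Id (bo c d))"
    by (simp add: mergeO)
  also have "\<dots> = bm (asc Mo x a c) (asc Mo y b d)
        \<cdot> bm (om (om hx ha \<cdot> To2 x a) hc) (om (om hy hb \<cdot> To2 y b) hdd)
        \<cdot> bm (om (Tm (om hx ha)) (Id (To c))) (om (Tm (om hy hb)) (Id (To d))) \<cdot> R (oo (To x) (To a)) (oo (To y) (To b)) c d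
        \<cdot> om (R x y a b) (Id (bo c d))"
    by (simp add: ext[OF Rn1])
  also have "\<dots> = bm (asc Mo x a c) (asc Mo y b d) \<cdot> bm (om (om hx ha) hc) (om (om hy hb) hdd)
      \<cdot> bm (om (om (mu T x) (mu T a)) (Id (To c))) (om (om (mu T y) (mu T b)) (Id (To d)))
      \<cdot> bm (om (To2 (To x) (To a)) (Id (To c))) (om (To2 (To y) (To b)) (Id (To d)))
      \<cdot> R (oo (To x) (To a)) (oo (To y) (To b)) c d \<cdot> om (R x y a b) (Id (bo c d))"
    by (simp add: ext[OF P1])
  also have "\<dots> = bm (om hx (om ha hc)) (om hy (om hb hdd)) \<cdot> bm (asc Mo (To x) (To a) (To c)) (asc Mo (To y) (To b) (To d))
      \<cdot> bm (om (om (mu T x) (mu T a)) (Id (To c))) (om (om (mu T y) (mu T b)) (Id (To d)))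
      \<cdot> bm (om (To2 (To x) (To a)) (Id (To c))) (om (To2 (To y) (To b)) (Id (To d)))
      \<cdot> R (oo (To x) (To a)) (oo (To y) (To b)) c d \<cdot> om (R x y a b) (Id (bo c d))"
    by (simp add: ext[OF P2])
  also have "\<dots> = bm (om hx (om ha hc)) (om hy (om hb hdd))
      \<cdot> bm (om (Id (To x)) (om (mu T a) (mu T c))) (om (Id (To y)) (om (mu T b) (mu T d)))
      \<cdot> bm (om (Id (To x)) (To2 (To a) (To c))) (om (Id (To y)) (To2 (To b) (To d)))
      \<cdot> R x y (oo (To a) (To c)) (oo (To b) (To d)) \<cdot> om (Id (bo x y)) (R a b c d)
      \<cdot> asc Mo (bo x y) (bo a b) (bo c d)"
    by (simp add: R1)
  also have "\<dots> = bm (om hx (om ha hc \<cdot> To2 a c)) (om hy (om hb hdd \<cdot> To2 b d))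
      \<cdot> bm (om (Id (To x)) (Tm (om ha hc))) (om (Id (To y)) (Tm (om hb hdd)))
      \<cdot> R x y (oo (To a) (To c)) (oo (To b) (To d)) \<cdot> om (Id (bo x y)) (R a b c d)
      \<cdot> asc Mo (bo x y) (bo a b) (bo c d)"
    by (simp add: ext[OF P3])
  also have "\<dots> = bm (om hx (om ha hc \<cdot> To2 a c)) (om hy (om hb hdd \<cdot> To2 b d))
      \<cdot> R x y (oo a c) (oo b d) \<cdot> om (Id (bo x y)) (bm (om ha hc) (om hb hdd))
      \<cdot> om (Id (bo x y)) (R a b c d) \<cdot> asc Mo (bo x y) (bo a b) (bo c d)"
    by (simp add: ext[OF Rn2])
  also have "\<dots> = (bm (om hx (om ha hc \<cdot> To2 a c)) (om hy (om hb hdd \<cdot> To2 b d))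
      \<cdot> R x y (oo a c) (oo b d)) \<cdot> om (Id (bo x y)) (bm (om ha hc) (om hb hdd) \<cdot> R a b c d)
      \<cdot> asc Mo (bo x y) (bo a b) (bo c d)"
    by (simp add: mergeO)
  finally show ?thesis unfolding xi_of_def by simp
qed


lemma xi_A2:
  assumes "is_alg T (x,hx)" "is_alg T (y,hy)" "is_alg T (a,ha)" "is_alg T (b,hb)" "is_alg T (c,hc)" "is_alg T (d,hdd)"
  shows "asc Mb (oo x y) (oo a b) (oo c d)
          \<cdot> bm (xi_of R (x,hx) (a,ha) (y,hy) (b,hb)) (Id (oo c d)) \<cdot> xi_of R (liftB (x,hx) (a,ha)) (c,hc) (liftB (y,hy) (b,hb)) (d,hdd)
        = bm (Id (oo x y)) (xi_of R (a,ha) (c,hc) (b,hb) (d,hdd)) \<cdot> xi_of R (x,hx) (liftB (a,ha) (c,hc)) (y,hy) (liftB (b,hb) (d,hdd))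
          \<cdot> om (asc Mb x a c) (asc Mb y b d)"
proof -
  have [simp]:
    "hx \<in> arr C" "dm C hx = To x" "cd C hx = x" "hx \<cdot> Tm hx = hx \<cdot> mu T x"
    "hy \<in> arr C" "dm C hy = To y" "cd C hy = y" "hy \<cdot> Tm hy = hy \<cdot> mu T y"
    "ha \<in> arr C" "dm C ha = To a" "cd C ha = a" "ha \<cdot> Tm ha = ha \<cdot> mu T a"
    "hb \<in> arr C" "dm C hb = To b" "cd C hb = b" "hb \<cdot> Tm hb = hb \<cdot> mu T b"
    "hc \<in> arr C" "dm C hc = To c" "cd C hc = c" "hc \<cdot> Tm hc = hc \<cdot> mu T c"
    "hdd \<in> arr C" "dm C hdd = To d" "cd C hdd = d" "hdd \<cdot> Tm hdd = hdd \<cdot> mu T d"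
    using assms unfolding alg_iff by auto
  have E1: "R x a y b \<cdot> om (bm hx ha \<cdot> Tb2 x a) (bm hy hb \<cdot> Tb2 y b)
     = bm (om (Tm hx) (Tm hy)) (om (Tm ha) (Tm hb)) \<cdot> R (To x) (To a) (To y) (To b) \<cdot> om (Tb2 x a) (Tb2 y b)"
  proof -
    have "om (bm hx ha \<cdot> Tb2 x a) (bm hy hb \<cdot> Tb2 y b) = om (bm hx ha) (bm hy hb) \<cdot> om (Tb2 x a) (Tb2 y b)"
      by (simp add: mergeO)
    thus ?thesis using R_nat[of hx ha hy hb] ext[OF R_nat[of hx ha hy hb]] by simp
  qed
  have E2: "R a c b d \<cdot> om (bm ha hc \<cdot> Tb2 a c) (bm hb hdd \<cdot> Tb2 b d)
     = bm (om (Tm ha) (Tm hb)) (om (Tm hc) (Tm hdd)) \<cdot> R (To a) (To c) (To b) (To d) \<cdot> om (Tb2 a c) (Tb2 b d)"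
  proof -
    have "om (bm ha hc \<cdot> Tb2 a c) (bm hb hdd \<cdot> Tb2 b d) = om (bm ha hc) (bm hb hdd) \<cdot> om (Tb2 a c) (Tb2 b d)"
      by (simp add: mergeO)
    thus ?thesis using R_nat[of ha hc hb hdd] ext[OF R_nat[of ha hc hb hdd]] by simp
  qed
  have P1: "bm (bm (om hx hy) (om ha hb) \<cdot> R x a y b) (Id (oo c d))
      \<cdot> bm (om (bm hx ha \<cdot> Tb2 x a) (bm hy hb \<cdot> Tb2 y b)) (om hc hdd)
    = bm (bm (om hx hy) (om ha hb)) (om hc hdd) \<cdot> bm (bm (om (mu T x) (mu T y)) (om (mu T a) (mu T b))) (Id (oo (To c) (To d)))
      \<cdot> bm (R (To x) (To a) (To y) (To b)) (Id (oo (To c) (To d)))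
      \<cdot> bm (om (Tb2 x a) (Tb2 y b)) (Id (oo (To c) (To d)))"
    by (simp add: mergeO mergeB E1 ext[OF E1])
  have P2: "asc Mb (oo x y) (oo a b) (oo c d) \<cdot> bm (bm (om hx hy) (om ha hb)) (om hc hdd)
    = bm (om hx hy) (bm (om ha hb) (om hc hdd)) \<cdot> asc Mb (oo (To x) (To y)) (oo (To a) (To b)) (oo (To c) (To d))"
    using asc_nat[OF monB, of "om hx hy" "om ha hb" "om hc hdd"] by simp
  have P3: "bm (Id (oo x y)) (bm (om ha hb) (om hc hdd) \<cdot> R a c b d)
      \<cdot> bm (om hx hy) (om (bm ha hc \<cdot> Tb2 a c) (bm hb hdd \<cdot> Tb2 b d))
    = bm (om hx hy) (bm (om ha hb) (om hc hdd)) \<cdot> bm (Id (oo (To x) (To y))) (bm (om (mu T a) (mu T b)) (om (mu T c) (mu T d)))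
      \<cdot> bm (Id (oo (To x) (To y))) (R (To a) (To c) (To b) (To d))
      \<cdot> bm (Id (oo (To x) (To y))) (om (Tb2 a c) (Tb2 b d))"
    by (simp add: mergeO mergeB E2 ext[OF E2])
  have "asc Mb (oo x y) (oo a b) (oo c d)
      \<cdot> bm (bm (om hx hy) (om ha hb) \<cdot> R x a y b) (Id (oo c d))
      \<cdot> bm (om (bm hx ha \<cdot> Tb2 x a) (bm hy hb \<cdot> Tb2 y b)) (om hc hdd) \<cdot> R (bo x a) c (bo y b) d
    = asc Mb (oo x y) (oo a b) (oo c d) \<cdot> bm (bm (om hx hy) (om ha hb)) (om hc hdd) \<cdot> bm (bm (om (mu T x) (mu T y)) (om (mu T a) (mu T b))) (Id (oo (To c) (To d)))
      \<cdot> bm (R (To x) (To a) (To y) (To b)) (Id (oo (To c) (To d)))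
      \<cdot> bm (om (Tb2 x a) (Tb2 y b)) (Id (oo (To c) (To d))) \<cdot> R (bo x a) c (bo y b) d"
    by (simp add: ext[OF P1])
  also have "\<dots> = bm (om hx hy) (bm (om ha hb) (om hc hdd)) \<cdot> asc Mb (oo (To x) (To y)) (oo (To a) (To b)) (oo (To c) (To d))
      \<cdot> bm (bm (om (mu T x) (mu T y)) (om (mu T a) (mu T b))) (Id (oo (To c) (To d)))
      \<cdot> bm (R (To x) (To a) (To y) (To b)) (Id (oo (To c) (To d)))
      \<cdot> bm (om (Tb2 x a) (Tb2 y b)) (Id (oo (To c) (To d))) \<cdot> R (bo x a) c (bo y b) d"
    by (simp add: ext[OF P2])
  also have "\<dots> = bm (om hx hy) (bm (om ha hb) (om hc hdd)) \<cdot> bm (Id (oo (To x) (To y))) (bm (om (mu T a) (mu T b)) (om (mu T c) (mu T d)))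
          \<cdot> bm (Id (oo (To x) (To y))) (R (To a) (To c) (To b) (To d))
          \<cdot> bm (Id (oo (To x) (To y))) (om (Tb2 a c) (Tb2 b d))
          \<cdot> R x (bo a c) y (bo b d)
          \<cdot> om (asc Mb x a c) (asc Mb y b d)"
    by (simp add: R2)
  also have "\<dots> = bm (Id (oo x y)) (bm (om ha hb) (om hc hdd) \<cdot> R a c b d)
      \<cdot> bm (om hx hy) (om (bm ha hc \<cdot> Tb2 a c) (bm hb hdd \<cdot> Tb2 b d)) \<cdot> R x (bo a c) y (bo b d)
          \<cdot> om (asc Mb x a c) (asc Mb y b d)"
    by (simp add: ext[OF P3])
  finally show ?thesis unfolding xi_of_def by simp
qed


lemma dir1: "duoidal_EM (xi_of R) nu varpi iota"
proof -
  have ud: "unit_data nu varpi iota" using rm[unfolded rmatrix_def, THEN conjunct1] .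
  note us = unit_simps[OF ud]
  have c2: "\<forall>X Y A B. is_alg T X \<longrightarrow> is_alg T Y \<longrightarrow> is_alg T A \<longrightarrow> is_alg T B \<longrightarrow>
        alg_hom T (liftO (liftB X Y) (liftB A B)) (liftB (liftO X A) (liftO Y B)) (xi_of R X Y A B)"
  proof (intro allI impI)
    fix X Y A B :: "'a \<times> 'b"
    assume "is_alg T X" "is_alg T Y" "is_alg T A" "is_alg T B"
    thus "alg_hom T (liftO (liftB X Y) (liftB A B)) (liftB (liftO X A) (liftO Y B)) (xi_of R X Y A B)"
      using xi_alg_hom[of "fst X" "snd X" "fst Y" "snd Y" "fst A" "snd A" "fst B" "snd B"] by simp
  qed
  have c3: "\<forall>X X' Y Y' A A' B B' f g h k.
        alg_hom T X X' f \<longrightarrow> alg_hom T Y Y' g \<longrightarrow> alg_hom T A A' h \<longrightarrow> alg_hom T B B' k \<longrightarrow>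
        xi_of R X' Y' A' B' \<cdot> om (bm f g) (bm h k) = bm (om f h) (om g k) \<cdot> xi_of R X Y A B"
  proof (intro allI impI)
    fix X X' Y Y' A A' B B' :: "'a \<times> 'b" and f g h k
    assume "alg_hom T X X' f" "alg_hom T Y Y' g" "alg_hom T A A' h" "alg_hom T B B' k"
    thus "xi_of R X' Y' A' B' \<cdot> om (bm f g) (bm h k) = bm (om f h) (om g k) \<cdot> xi_of R X Y A B"
      using xi_nat[of "fst X" "snd X" "fst X'" "snd X'" f "fst Y" "snd Y" "fst Y'" "snd Y'" g
         "fst A" "snd A" "fst A'" "snd A'" h "fst B" "snd B" "fst B'" "snd B'" k] by simp
  qed
  have c4: "\<forall>X Y A B Cc D. is_alg T X \<longrightarrow> is_alg T Y \<longrightarrow> is_alg T A \<longrightarrow> is_alg T B \<longrightarrow>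
        is_alg T Cc \<longrightarrow> is_alg T D \<longrightarrow>
        bm (asc Mo (fst X) (fst A) (fst Cc)) (asc Mo (fst Y) (fst B) (fst D))
          \<cdot> xi_of R (liftO X A) (liftO Y B) Cc D \<cdot> om (xi_of R X Y A B) (Id (bo (fst Cc) (fst D)))
        = xi_of R X Y (liftO A Cc) (liftO B D) \<cdot> om (Id (bo (fst X) (fst Y))) (xi_of R A B Cc D)
          \<cdot> asc Mo (bo (fst X) (fst Y)) (bo (fst A) (fst B)) (bo (fst Cc) (fst D))"
  proof (intro allI impI)
    fix X Y A B Cc D :: "'a \<times> 'b"
    assume "is_alg T X" "is_alg T Y" "is_alg T A" "is_alg T B" "is_alg T Cc" "is_alg T D"
    thus "bm (asc Mo (fst X) (fst A) (fst Cc)) (asc Mo (fst Y) (fst B) (fst D))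
          \<cdot> xi_of R (liftO X A) (liftO Y B) Cc D \<cdot> om (xi_of R X Y A B) (Id (bo (fst Cc) (fst D)))
        = xi_of R X Y (liftO A Cc) (liftO B D) \<cdot> om (Id (bo (fst X) (fst Y))) (xi_of R A B Cc D)
          \<cdot> asc Mo (bo (fst X) (fst Y)) (bo (fst A) (fst B)) (bo (fst Cc) (fst D))"
      using xi_A1[of "fst X" "snd X" "fst Y" "snd Y" "fst A" "snd A" "fst B" "snd B" "fst Cc" "snd Cc" "fst D" "snd D"]
      by simp
  qed
  have c5: "\<forall>X A Cc Y B D. is_alg T X \<longrightarrow> is_alg T Y \<longrightarrow> is_alg T A \<longrightarrow> is_alg T B \<longrightarrow>
        is_alg T Cc \<longrightarrow> is_alg T D \<longrightarrow>
        asc Mb (oo (fst X) (fst Y)) (oo (fst A) (fst B)) (oo (fst Cc) (fst D))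
          \<cdot> bm (xi_of R X A Y B) (Id (oo (fst Cc) (fst D))) \<cdot> xi_of R (liftB X A) Cc (liftB Y B) D
        = bm (Id (oo (fst X) (fst Y))) (xi_of R A Cc B D) \<cdot> xi_of R X (liftB A Cc) Y (liftB B D)
          \<cdot> om (asc Mb (fst X) (fst A) (fst Cc)) (asc Mb (fst Y) (fst B) (fst D))"
  proof (intro allI impI)
    fix X Y A B Cc D :: "'a \<times> 'b"
    assume "is_alg T X" "is_alg T Y" "is_alg T A" "is_alg T B" "is_alg T Cc" "is_alg T D"
    thus "asc Mb (oo (fst X) (fst Y)) (oo (fst A) (fst B)) (oo (fst Cc) (fst D))
          \<cdot> bm (xi_of R X A Y B) (Id (oo (fst Cc) (fst D))) \<cdot> xi_of R (liftB X A) Cc (liftB Y B) D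
        = bm (Id (oo (fst X) (fst Y))) (xi_of R A Cc B D) \<cdot> xi_of R X (liftB A Cc) Y (liftB B D)
          \<cdot> om (asc Mb (fst X) (fst A) (fst Cc)) (asc Mb (fst Y) (fst B) (fst D))"
      using xi_A2[of "fst X" "snd X" "fst Y" "snd Y" "fst A" "snd A" "fst B" "snd B" "fst Cc" "snd Cc" "fst D" "snd D"]
      by simp
  qed
  have c6: "\<forall>A B. is_alg T A \<longrightarrow> is_alg T B \<longrightarrow>
        xi_of R botA botA A B \<cdot> om nu (Id (bo (fst A) (fst B)))
          = bm (inv (lu Mo (fst A))) (inv (lu Mo (fst B))) \<cdot> lu Mo (bo (fst A) (fst B)) \<and>
        xi_of R A B botA botA \<cdot> om (Id (bo (fst A) (fst B))) nu
          = bm (inv (ru Mo (fst A))) (inv (ru Mo (fst B))) \<cdot> ru Mo (bo (fst A) (fst B)) \<and>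
        bm varpi (Id (oo (fst A) (fst B))) \<cdot> xi_of R oneA A oneA B
          = inv (lu Mb (oo (fst A) (fst B))) \<cdot> om (lu Mb (fst A)) (lu Mb (fst B)) \<and>
        bm (Id (oo (fst A) (fst B))) varpi \<cdot> xi_of R A oneA B oneA
          = inv (ru Mb (oo (fst A) (fst B))) \<cdot> om (ru Mb (fst A)) (ru Mb (fst B))"
  proof (intro allI impI)
    fix A B :: "'a \<times> 'b"
    assume A: "is_alg T A" and B: "is_alg T B"
    have [simp]: "snd A \<in> arr C" "dm C (snd A) = To (fst A)" "cd C (snd A) = fst A"
      "snd B \<in> arr C" "dm C (snd B) = To (fst B)" "cd C (snd B) = fst B"
      using A B unfolding is_alg_def Hom_iff by auto
    show "xi_of R botA botA A B \<cdot> om nu (Id (bo (fst A) (fst B)))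
          = bm (inv (lu Mo (fst A))) (inv (lu Mo (fst B))) \<cdot> lu Mo (bo (fst A) (fst B)) \<and>
        xi_of R A B botA botA \<cdot> om (Id (bo (fst A) (fst B))) nu
          = bm (inv (ru Mo (fst A))) (inv (ru Mo (fst B))) \<cdot> ru Mo (bo (fst A) (fst B)) \<and>
        bm varpi (Id (oo (fst A) (fst B))) \<cdot> xi_of R oneA A oneA B
          = inv (lu Mb (oo (fst A) (fst B))) \<cdot> om (lu Mb (fst A)) (lu Mb (fst B)) \<and>
        bm (Id (oo (fst A) (fst B))) varpi \<cdot> xi_of R A oneA B oneA
          = inv (ru Mb (oo (fst A) (fst B))) \<cdot> om (ru Mb (fst A)) (ru Mb (fst B))"
      using rm[unfolded rmatrix_def, THEN conjunct2, THEN conjunct2, THEN conjunct2, THEN conjunct1, rule_format, OF A B] us by (simp add: xi_of_def)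
  qed
  show ?thesis unfolding duoidal_EM_def using ud c2 c3 c4 c5 c6 by blast
qed

lemma roundtrip1: "R_of (xi_of R) a b c d = R a b c d"
proof -
  have "R_of (xi_of R) a b c d = bm (om (mu T a) (mu T c)) (om (mu T b) (mu T d)) \<cdot>
     R (To a) (To b) (To c) (To d) \<cdot> om (bm (eta T a) (eta T b)) (bm (eta T c) (eta T d))"
    unfolding R_of_def xi_of_def by simp
  also have "\<dots> = bm (om (mu T a) (mu T c)) (om (mu T b) (mu T d)) \<cdot>
     bm (om (Tm (eta T a)) (Tm (eta T c))) (om (Tm (eta T b)) (Tm (eta T d))) \<cdot> R a b c d"
    using R_nat[of "eta T a" "eta T b" "eta T c" "eta T d"] by simp
  also have "\<dots> = R a b c d" by (simp add: mergeO mergeB)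
  finally show ?thesis .
qed

end


lemma ahT: "f \<in> arr C \<Longrightarrow> alg_hom T (free (dm C f)) (free (cd C f)) (Tm f)"
  unfolding alg_hom_def Hom_iff using mu_nat by simp
lemma ahS: "is_alg T (x,h) \<Longrightarrow> alg_hom T (free x) (x,h) h"
  unfolding alg_hom_iff alg_iff by (simp add: mu_assoc)
lemma ahS': "is_alg T X \<Longrightarrow> alg_hom T (free (fst X)) X (snd X)"
  using ahS[of "fst X" "snd X"] by simp
lemma ahId: "is_alg T X \<Longrightarrow> alg_hom T X X (Id (fst X))"
  unfolding alg_hom_def is_alg_def Hom_iff by auto
lemma ahMu: "alg_hom T (free (To a)) (free a) (mu T a)"
  using ahS'[OF alg_free[of a]] by simp
lemma ahTb2: "alg_hom T (free (bo x y)) (liftB (free x) (free y)) (Tb2 x y)"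
  unfolding alg_hom_def Hom_iff using T2_mu[OF monB bimB] by (simp add: alg_liftB)
lemma alg_unit: "is_alg T X \<Longrightarrow> snd X \<cdot> eta T (fst X) = Id (fst X)"
  unfolding is_alg_def by simp

section \<open>Direction 2\<close>

context
  fixes xi nu varpi iota assumes de: "duoidal_EM xi nu varpi iota"
begin

lemma xi_ah: "is_alg T X \<Longrightarrow> is_alg T Y \<Longrightarrow> is_alg T A \<Longrightarrow> is_alg T B \<Longrightarrow>
        alg_hom T (liftO (liftB X Y) (liftB A B)) (liftB (liftO X A) (liftO Y B)) (xi X Y A B)"
  using de[unfolded duoidal_EM_def, THEN conjunct2, THEN conjunct1] by blast

lemma xi_simps[simp]: "is_alg T X \<Longrightarrow> is_alg T Y \<Longrightarrow> is_alg T A \<Longrightarrow> is_alg T B \<Longrightarrow>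
   xi X Y A B \<in> arr C"
   "is_alg T X \<Longrightarrow> is_alg T Y \<Longrightarrow> is_alg T A \<Longrightarrow> is_alg T B \<Longrightarrow>
   dm C (xi X Y A B) = oo (bo (fst X) (fst Y)) (bo (fst A) (fst B))"
   "is_alg T X \<Longrightarrow> is_alg T Y \<Longrightarrow> is_alg T A \<Longrightarrow> is_alg T B \<Longrightarrow>
   cd C (xi X Y A B) = bo (oo (fst X) (fst A)) (oo (fst Y) (fst B))"
  using xi_ah[of X Y A B] unfolding alg_hom_def Hom_iff by simp_all

lemma xi_nat2: "alg_hom T X X' f \<Longrightarrow> alg_hom T Y Y' g \<Longrightarrow> alg_hom T A A' h \<Longrightarrow> alg_hom T B B' k \<Longrightarrow>
        xi X' Y' A' B' \<cdot> om (bm f g) (bm h k) = bm (om f h) (om g k) \<cdot> xi X Y A B"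
  using de[unfolded duoidal_EM_def, THEN conjunct2, THEN conjunct2, THEN conjunct1] by blast

lemma ud2: "unit_data nu varpi iota" using de[unfolded duoidal_EM_def, THEN conjunct1] .

lemma Rof_simps[simp]: "R_of xi a b c d \<in> arr C" "dm C (R_of xi a b c d) = oo (bo a b) (bo c d)"
  "cd C (R_of xi a b c d) = bo (oo (To a) (To c)) (oo (To b) (To d))"
  unfolding R_of_def by simp_all

lemma rt2:
  assumes X: "is_alg T (x,hx)" and Y: "is_alg T (y,hy)" and A: "is_alg T (a,ha)" and B: "is_alg T (b,hb)"
  shows "bm (om hx ha) (om hy hb) \<cdot> R_of xi x y a b = xi (x,hx) (y,hy) (a,ha) (b,hb)"
proof -
  have [simp]: "hx \<in> arr C" "dm C hx = To x" "cd C hx = x" "hx \<cdot> eta T x = Id x"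
    "hy \<in> arr C" "dm C hy = To y" "cd C hy = y" "hy \<cdot> eta T y = Id y"
    "ha \<in> arr C" "dm C ha = To a" "cd C ha = a" "ha \<cdot> eta T a = Id a"
    "hb \<in> arr C" "dm C hb = To b" "cd C hb = b" "hb \<cdot> eta T b = Id b"
    using X Y A B unfolding alg_iff by auto
  have N: "xi (x,hx) (y,hy) (a,ha) (b,hb) \<cdot> om (bm hx hy) (bm ha hb) = bm (om hx ha) (om hy hb) \<cdot> xi (free x) (free y) (free a) (free b)"
    using xi_nat2[OF ahS[OF X] ahS[OF Y] ahS[OF A] ahS[OF B]] .
  have "bm (om hx ha) (om hy hb) \<cdot> R_of xi x y a b = xi (x,hx) (y,hy) (a,ha) (b,hb) \<cdot> om (bm hx hy) (bm ha hb)
     \<cdot> om (bm (eta T x) (eta T y)) (bm (eta T a) (eta T b))"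
    unfolding R_of_def using X Y A B by (simp add: ext[OF N[symmetric]])
  also have "\<dots> = xi (x,hx) (y,hy) (a,ha) (b,hb)" using X Y A B by (simp add: mergeO mergeB)
  finally show ?thesis .
qed

lemma Rof_nat: "f \<in> arr C \<Longrightarrow> g \<in> arr C \<Longrightarrow> h \<in> arr C \<Longrightarrow> k \<in> arr C \<Longrightarrow>
  R_of xi (cd C f) (cd C g) (cd C h) (cd C k) \<cdot> om (bm f g) (bm h k)
   = bm (om (Tm f) (Tm h)) (om (Tm g) (Tm k)) \<cdot> R_of xi (dm C f) (dm C g) (dm C h) (dm C k)"
proof -
  assume [simp]: "f \<in> arr C" "g \<in> arr C" "h \<in> arr C" "k \<in> arr C"
  have L: "om (bm (eta T (cd C f)) (eta T (cd C g))) (bm (eta T (cd C h)) (eta T (cd C k))) \<cdot> om (bm f g) (bm h k)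
     = om (bm (Tm f) (Tm g)) (bm (Tm h) (Tm k)) \<cdot> om (bm (eta T (dm C f)) (eta T (dm C g))) (bm (eta T (dm C h)) (eta T (dm C k)))"
    by (simp add: mergeO mergeB eta_nat)
  have N: "xi (free (cd C f)) (free (cd C g)) (free (cd C h)) (free (cd C k)) \<cdot> om (bm (Tm f) (Tm g)) (bm (Tm h) (Tm k))
     = bm (om (Tm f) (Tm h)) (om (Tm g) (Tm k)) \<cdot> xi (free (dm C f)) (free (dm C g)) (free (dm C h)) (free (dm C k))"
    using xi_nat2[OF ahT ahT ahT ahT] by simp
  show ?thesis unfolding R_of_def by (simp add: L ext[OF N])
qed

lemma Rof_hom: "R_of xi a b c d \<in> Hom (oo (bo a b) (bo c d)) (bo (oo (To a) (To c)) (oo (To b) (To d)))"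
  unfolding Hom_iff by simp

lemma Rof_unit:
  assumes A: "is_alg T A" and B: "is_alg T B"
  shows "bm (om To0 (snd A)) (om To0 (snd B)) \<cdot> R_of xi bot bot (fst A) (fst B) \<cdot> om nu (Id (bo (fst A) (fst B)))
          = bm (inv (lu Mo (fst A))) (inv (lu Mo (fst B))) \<cdot> lu Mo (bo (fst A) (fst B)) \<and>
        bm (om (snd A) To0) (om (snd B) To0) \<cdot> R_of xi (fst A) (fst B) bot bot \<cdot> om (Id (bo (fst A) (fst B))) nu
          = bm (inv (ru Mo (fst A))) (inv (ru Mo (fst B))) \<cdot> ru Mo (bo (fst A) (fst B)) \<and>
        bm varpi (Id (oo (fst A) (fst B))) \<cdot> bm (om Tb0 Tb0) (om (snd A) (snd B)) \<cdot> R_of xi one (fst A) one (fst B)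
          = inv (lu Mb (oo (fst A) (fst B))) \<cdot> om (lu Mb (fst A)) (lu Mb (fst B)) \<and>
        bm (Id (oo (fst A) (fst B))) varpi \<cdot> bm (om (snd A) (snd B)) (om Tb0 Tb0) \<cdot> R_of xi (fst A) one (fst B) one
          = inv (ru Mb (oo (fst A) (fst B))) \<cdot> om (ru Mb (fst A)) (ru Mb (fst B))"
proof -
  have [simp]: "snd A \<in> arr C" "dm C (snd A) = To (fst A)" "cd C (snd A) = fst A"
      "snd B \<in> arr C" "dm C (snd B) = To (fst B)" "cd C (snd B) = fst B"
      using A B unfolding is_alg_def Hom_iff by auto
  note us = unit_simps[OF ud2]
  have A': "is_alg T (fst A, snd A)" and B': "is_alg T (fst B, snd B)" using A B by simp_all
  have e1: "bm (om To0 (snd A)) (om To0 (snd B)) \<cdot> R_of xi bot bot (fst A) (fst B) = xi botA botA A B"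
    using rt2[OF alg_botA alg_botA A' B'] by simp
  have e2: "bm (om (snd A) To0) (om (snd B) To0) \<cdot> R_of xi (fst A) (fst B) bot bot = xi A B botA botA"
    using rt2[OF A' B' alg_botA alg_botA] by simp
  have e3: "bm (om Tb0 Tb0) (om (snd A) (snd B)) \<cdot> R_of xi one (fst A) one (fst B) = xi oneA A oneA B"
    using rt2[OF alg_oneA A' alg_oneA B'] by simp
  have e4: "bm (om (snd A) (snd B)) (om Tb0 Tb0) \<cdot> R_of xi (fst A) one (fst B) one = xi A oneA B oneA"
    using rt2[OF A' alg_oneA B' alg_oneA] by simp
  show ?thesis using de[unfolded duoidal_EM_def, THEN conjunct2, THEN conjunct2, THEN conjunct2, THEN conjunct2, THEN conjunct2, rule_format, OF A B] us A B
    by (simp add: ext[OF e1] ext[OF e2] e3 e4)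
qed

lemma Rof_lift: "bm (om (mu T a) (mu T c)) (om (mu T b) (mu T d)) \<cdot> R_of xi (To a) (To b) (To c) (To d)
          \<cdot> om (Tb2 a b) (Tb2 c d) \<cdot> To2 (bo a b) (bo c d)
        = bm (om (mu T a) (mu T c)) (om (mu T b) (mu T d))
          \<cdot> bm (To2 (To a) (To c)) (To2 (To b) (To d)) \<cdot> Tb2 (oo (To a) (To c)) (oo (To b) (To d))
          \<cdot> Tm (R_of xi a b c d)"
proof -
  have e1: "bm (om (mu T a) (mu T c)) (om (mu T b) (mu T d)) \<cdot> R_of xi (To a) (To b) (To c) (To d)
     = xi (free a) (free b) (free c) (free d)"
    using rt2[OF alg_free alg_free alg_free alg_free] .
  note H0 = xi_ah[OF alg_free alg_free alg_free alg_free, of a b c d]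
  have H: "bm (om (mu T a) (mu T c)) (om (mu T b) (mu T d)) \<cdot> bm (To2 (To a) (To c)) (To2 (To b) (To d))
       \<cdot> Tb2 (oo (To a) (To c)) (oo (To b) (To d)) \<cdot> Tm (xi (free a) (free b) (free c) (free d))
     = xi (free a) (free b) (free c) (free d) \<cdot> om (bm (mu T a) (mu T b)) (bm (mu T c) (mu T d))
       \<cdot> om (Tb2 (To a) (To b)) (Tb2 (To c) (To d)) \<cdot> To2 (bo (To a) (To b)) (bo (To c) (To d))"
    using H0 unfolding alg_hom_def by (simp add: mergeO mergeB)
  have n1: "To2 (bo (To a) (To b)) (bo (To c) (To d)) \<cdot> Tm (om (bm (eta T a) (eta T b)) (bm (eta T c) (eta T d)))
     = om (Tm (bm (eta T a) (eta T b))) (Tm (bm (eta T c) (eta T d))) \<cdot> To2 (bo a b) (bo c d)"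
    using T2_nat[OF monO bimO, of "bm (eta T a) (eta T b)" "bm (eta T c) (eta T d)"] by simp
  have n2: "Tb2 (To a) (To b) \<cdot> Tm (bm (eta T a) (eta T b)) = bm (Tm (eta T a)) (Tm (eta T b)) \<cdot> Tb2 a b"
    using T2_nat[OF monB bimB, of "eta T a" "eta T b"] by simp
  have n3: "Tb2 (To c) (To d) \<cdot> Tm (bm (eta T c) (eta T d)) = bm (Tm (eta T c)) (Tm (eta T d)) \<cdot> Tb2 c d"
    using T2_nat[OF monB bimB, of "eta T c" "eta T d"] by simp
  have L: "om (bm (mu T a) (mu T b)) (bm (mu T c) (mu T d))
       \<cdot> om (Tb2 (To a) (To b)) (Tb2 (To c) (To d)) \<cdot> To2 (bo (To a) (To b)) (bo (To c) (To d))
       \<cdot> Tm (om (bm (eta T a) (eta T b)) (bm (eta T c) (eta T d)))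
     = om (Tb2 a b) (Tb2 c d) \<cdot> To2 (bo a b) (bo c d)"
    by (simp add: n1 mergeO mergeB n2 n3)
  have T: "Tm (R_of xi a b c d) = Tm (xi (free a) (free b) (free c) (free d))
      \<cdot> Tm (om (bm (eta T a) (eta T b)) (bm (eta T c) (eta T d)))" unfolding R_of_def by simp
  show ?thesis using arg_cong[OF H, of "\<lambda>z. z \<cdot> Tm (om (bm (eta T a) (eta T b)) (bm (eta T c) (eta T d)))"]
    by (simp add: ext[OF e1] T L)
qed


lemma Rof_R1: "bm (asc Mo (To a) (To c) (To x)) (asc Mo (To b) (To d) (To y))
          \<cdot> bm (om (om (mu T a) (mu T c)) (Id (To x))) (om (om (mu T b) (mu T d)) (Id (To y)))
          \<cdot> bm (om (To2 (To a) (To c)) (Id (To x))) (om (To2 (To b) (To d)) (Id (To y)))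
          \<cdot> R_of xi (oo (To a) (To c)) (oo (To b) (To d)) x y \<cdot> om (R_of xi a b c d) (Id (bo x y))
        = bm (om (Id (To a)) (om (mu T c) (mu T x))) (om (Id (To b)) (om (mu T d) (mu T y)))
          \<cdot> bm (om (Id (To a)) (To2 (To c) (To x))) (om (Id (To b)) (To2 (To d) (To y)))
          \<cdot> R_of xi a b (oo (To c) (To x)) (oo (To d) (To y)) \<cdot> om (Id (bo a b)) (R_of xi c d x y)
          \<cdot> asc Mo (bo a b) (bo c d) (bo x y)"
proof -
  note T2e = T2_eta[OF monO bimO] T2_eta[OF monB bimB]
  have RO1: "R_of xi (oo (To a) (To c)) (oo (To b) (To d)) x y = xi (free (oo (To a) (To c))) (free (oo (To b) (To d))) (free x) (free y)
     \<cdot> om (bm (eta T (oo (To a) (To c))) (eta T (oo (To b) (To d)))) (bm (eta T x) (eta T y))"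
    unfolding R_of_def ..
  have RO2: "R_of xi a b (oo (To c) (To x)) (oo (To d) (To y)) = xi (free a) (free b) (free (oo (To c) (To x))) (free (oo (To d) (To y)))
     \<cdot> om (bm (eta T a) (eta T b)) (bm (eta T (oo (To c) (To x))) (eta T (oo (To d) (To y))))"
    unfolding R_of_def ..
  have S1: "bm (om (om (mu T a) (mu T c)) (Id (To x))) (om (om (mu T b) (mu T d)) (Id (To y)))
          \<cdot> bm (om (To2 (To a) (To c)) (Id (To x))) (om (To2 (To b) (To d)) (Id (To y)))
       = bm (om (om (mu T a) (mu T c) \<cdot> To2 (To a) (To c)) (Id (To x))) (om (om (mu T b) (mu T d) \<cdot> To2 (To b) (To d)) (Id (To y)))"
    by (simp add: mergeO mergeB)
  have S1': "bm (om (Id (To a)) (om (mu T c) (mu T x))) (om (Id (To b)) (om (mu T d) (mu T y)))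
          \<cdot> bm (om (Id (To a)) (To2 (To c) (To x))) (om (Id (To b)) (To2 (To d) (To y)))
       = bm (om (Id (To a)) (om (mu T c) (mu T x) \<cdot> To2 (To c) (To x))) (om (Id (To b)) (om (mu T d) (mu T y) \<cdot> To2 (To d) (To y)))"
    by (simp add: mergeO mergeB)
  have N1: "xi (liftO (free a) (free c)) (liftO (free b) (free d)) (free x) (free y) \<cdot> om (bm (om (mu T a) (mu T c) \<cdot> To2 (To a) (To c)) (om (mu T b) (mu T d) \<cdot> To2 (To b) (To d))) (bm (Id (To x)) (Id (To y)))
      = bm (om (om (mu T a) (mu T c) \<cdot> To2 (To a) (To c)) (Id (To x))) (om (om (mu T b) (mu T d) \<cdot> To2 (To b) (To d)) (Id (To y))) \<cdot> xi (free (oo (To a) (To c))) (free (oo (To b) (To d))) (free x) (free y)"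
    using xi_nat2[OF ahS'[OF alg_liftO[OF alg_free alg_free]] ahS'[OF alg_liftO[OF alg_free alg_free]]
        ahId[OF alg_free] ahId[OF alg_free], of a c b d x y] by simp
  have N2: "xi (free a) (free b) (liftO (free c) (free x)) (liftO (free d) (free y)) \<cdot> om (bm (Id (To a)) (Id (To b))) (bm (om (mu T c) (mu T x) \<cdot> To2 (To c) (To x)) (om (mu T d) (mu T y) \<cdot> To2 (To d) (To y)))
      = bm (om (Id (To a)) (om (mu T c) (mu T x) \<cdot> To2 (To c) (To x))) (om (Id (To b)) (om (mu T d) (mu T y) \<cdot> To2 (To d) (To y))) \<cdot> xi (free a) (free b) (free (oo (To c) (To x))) (free (oo (To d) (To y)))"
    using xi_nat2[OF ahId[OF alg_free] ahId[OF alg_free] ahS'[OF alg_liftO[OF alg_free alg_free]] ahS'[OF alg_liftO[OF alg_free alg_free]], of a b c x d y] by simp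
  have S2: "om (bm (om (mu T a) (mu T c) \<cdot> To2 (To a) (To c)) (om (mu T b) (mu T d) \<cdot> To2 (To b) (To d))) (bm (Id (To x)) (Id (To y)))
      \<cdot> om (bm (eta T (oo (To a) (To c))) (eta T (oo (To b) (To d)))) (bm (eta T x) (eta T y))
      \<cdot> om (R_of xi a b c d) (Id (bo x y))
    = om (xi (free a) (free b) (free c) (free d)) (Id (bo (To x) (To y)))
      \<cdot> om (om (bm (eta T a) (eta T b)) (bm (eta T c) (eta T d))) (bm (eta T x) (eta T y))"
    by (simp add: mergeO mergeB T2e R_of_def)
  have S2': "om (bm (Id (To a)) (Id (To b))) (bm (om (mu T c) (mu T x) \<cdot> To2 (To c) (To x)) (om (mu T d) (mu T y) \<cdot> To2 (To d) (To y)))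
      \<cdot> om (bm (eta T a) (eta T b)) (bm (eta T (oo (To c) (To x))) (eta T (oo (To d) (To y))))
      \<cdot> om (Id (bo a b)) (R_of xi c d x y)
    = om (bm (eta T a) (eta T b)) (xi (free c) (free d) (free x) (free y) \<cdot> om (bm (eta T c) (eta T d)) (bm (eta T x) (eta T y)))"
    by (simp add: mergeO mergeB T2e R_of_def)
  have A1: "bm (asc Mo (To a) (To c) (To x)) (asc Mo (To b) (To d) (To y))
          \<cdot> xi (liftO (free a) (free c)) (liftO (free b) (free d)) (free x) (free y) \<cdot> om (xi (free a) (free b) (free c) (free d)) (Id (bo (To x) (To y)))
        = xi (free a) (free b) (liftO (free c) (free x)) (liftO (free d) (free y)) \<cdot> om (Id (bo (To a) (To b))) (xi (free c) (free d) (free x) (free y))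
          \<cdot> asc Mo (bo (To a) (To b)) (bo (To c) (To d)) (bo (To x) (To y))"
    using de[unfolded duoidal_EM_def, THEN conjunct2, THEN conjunct2, THEN conjunct2, THEN conjunct1, rule_format, OF alg_free alg_free alg_free alg_free alg_free alg_free, of a c x b d y] by simp
  have S3: "asc Mo (bo (To a) (To b)) (bo (To c) (To d)) (bo (To x) (To y))
      \<cdot> om (om (bm (eta T a) (eta T b)) (bm (eta T c) (eta T d))) (bm (eta T x) (eta T y))
     = om (bm (eta T a) (eta T b)) (om (bm (eta T c) (eta T d)) (bm (eta T x) (eta T y))) \<cdot> asc Mo (bo a b) (bo c d) (bo x y)"
    using asc_nat[OF monO, of "bm (eta T a) (eta T b)" "bm (eta T c) (eta T d)" "bm (eta T x) (eta T y)"] by simp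
  have "bm (asc Mo (To a) (To c) (To x)) (asc Mo (To b) (To d) (To y))
          \<cdot> bm (om (om (mu T a) (mu T c)) (Id (To x))) (om (om (mu T b) (mu T d)) (Id (To y)))
          \<cdot> bm (om (To2 (To a) (To c)) (Id (To x))) (om (To2 (To b) (To d)) (Id (To y)))
          \<cdot> R_of xi (oo (To a) (To c)) (oo (To b) (To d)) x y \<cdot> om (R_of xi a b c d) (Id (bo x y))
     = bm (asc Mo (To a) (To c) (To x)) (asc Mo (To b) (To d) (To y)) \<cdot> bm (om (om (mu T a) (mu T c) \<cdot> To2 (To a) (To c)) (Id (To x))) (om (om (mu T b) (mu T d) \<cdot> To2 (To b) (To d)) (Id (To y)))
        \<cdot> xi (free (oo (To a) (To c))) (free (oo (To b) (To d))) (free x) (free y)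
        \<cdot> om (bm (eta T (oo (To a) (To c))) (eta T (oo (To b) (To d)))) (bm (eta T x) (eta T y))
        \<cdot> om (R_of xi a b c d) (Id (bo x y))"
    by (simp add: RO1 ext[OF S1])
  also have "\<dots> = bm (asc Mo (To a) (To c) (To x)) (asc Mo (To b) (To d) (To y))
        \<cdot> xi (liftO (free a) (free c)) (liftO (free b) (free d)) (free x) (free y) \<cdot> om (bm (om (mu T a) (mu T c) \<cdot> To2 (To a) (To c)) (om (mu T b) (mu T d) \<cdot> To2 (To b) (To d))) (bm (Id (To x)) (Id (To y)))
        \<cdot> om (bm (eta T (oo (To a) (To c))) (eta T (oo (To b) (To d)))) (bm (eta T x) (eta T y))
        \<cdot> om (R_of xi a b c d) (Id (bo x y))"
    by (simp add: ext[OF N1[symmetric]])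
  also have "\<dots> = bm (asc Mo (To a) (To c) (To x)) (asc Mo (To b) (To d) (To y))
        \<cdot> xi (liftO (free a) (free c)) (liftO (free b) (free d)) (free x) (free y) \<cdot> om (xi (free a) (free b) (free c) (free d)) (Id (bo (To x) (To y)))
        \<cdot> om (om (bm (eta T a) (eta T b)) (bm (eta T c) (eta T d))) (bm (eta T x) (eta T y))"
    by (simp only: S2)
  also have "\<dots> = xi (free a) (free b) (liftO (free c) (free x)) (liftO (free d) (free y)) \<cdot> om (Id (bo (To a) (To b))) (xi (free c) (free d) (free x) (free y))
          \<cdot> om (bm (eta T a) (eta T b)) (om (bm (eta T c) (eta T d)) (bm (eta T x) (eta T y))) \<cdot> asc Mo (bo a b) (bo c d) (bo x y)"
    using arg_cong[OF A1, of "\<lambda>z. z \<cdot> om (om (bm (eta T a) (eta T b)) (bm (eta T c) (eta T d))) (bm (eta T x) (eta T y))"]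
    by (simp add: S3)
  also have "\<dots> = xi (free a) (free b) (liftO (free c) (free x)) (liftO (free d) (free y)) \<cdot> om (bm (Id (To a)) (Id (To b))) (bm (om (mu T c) (mu T x) \<cdot> To2 (To c) (To x)) (om (mu T d) (mu T y) \<cdot> To2 (To d) (To y)))
      \<cdot> om (bm (eta T a) (eta T b)) (bm (eta T (oo (To c) (To x))) (eta T (oo (To d) (To y))))
      \<cdot> om (Id (bo a b)) (R_of xi c d x y) \<cdot> asc Mo (bo a b) (bo c d) (bo x y)"
    using arg_cong[OF S2', of "\<lambda>z. xi (free a) (free b) (liftO (free c) (free x)) (liftO (free d) (free y)) \<cdot> z \<cdot> asc Mo (bo a b) (bo c d) (bo x y)"]
    by (simp add: mergeO)
  also have "\<dots> = bm (om (Id (To a)) (om (mu T c) (mu T x))) (om (Id (To b)) (om (mu T d) (mu T y)))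
          \<cdot> bm (om (Id (To a)) (To2 (To c) (To x))) (om (Id (To b)) (To2 (To d) (To y)))
          \<cdot> R_of xi a b (oo (To c) (To x)) (oo (To d) (To y)) \<cdot> om (Id (bo a b)) (R_of xi c d x y)
          \<cdot> asc Mo (bo a b) (bo c d) (bo x y)"
    using arg_cong[OF N2, of "\<lambda>z. z \<cdot> om (bm (eta T a) (eta T b)) (bm (eta T (oo (To c) (To x))) (eta T (oo (To d) (To y))))
      \<cdot> om (Id (bo a b)) (R_of xi c d x y) \<cdot> asc Mo (bo a b) (bo c d) (bo x y)"]
    by (simp add: RO2 ext[OF S1'])
  finally show ?thesis .
qed



lemma Rof_R2: "asc Mb (oo (To x) (To y)) (oo (To a) (To b)) (oo (To c) (To d))
          \<cdot> bm (bm (om (mu T x) (mu T y)) (om (mu T a) (mu T b))) (Id (oo (To c) (To d)))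
          \<cdot> bm (R_of xi (To x) (To a) (To y) (To b)) (Id (oo (To c) (To d)))
          \<cdot> bm (om (Tb2 x a) (Tb2 y b)) (Id (oo (To c) (To d)))
          \<cdot> R_of xi (bo x a) c (bo y b) d
        = bm (Id (oo (To x) (To y))) (bm (om (mu T a) (mu T b)) (om (mu T c) (mu T d)))
          \<cdot> bm (Id (oo (To x) (To y))) (R_of xi (To a) (To c) (To b) (To d))
          \<cdot> bm (Id (oo (To x) (To y))) (om (Tb2 a c) (Tb2 b d))
          \<cdot> R_of xi x (bo a c) y (bo b d)
          \<cdot> om (asc Mb x a c) (asc Mb y b d)"
proof -
  note T2e = T2_eta[OF monO bimO] T2_eta[OF monB bimB]
  have E1: "bm (om (mu T x) (mu T y)) (om (mu T a) (mu T b)) \<cdot> R_of xi (To x) (To a) (To y) (To b) = xi (free x) (free a) (free y) (free b)"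
    using rt2[OF alg_free alg_free alg_free alg_free] .
  have E2: "bm (om (mu T a) (mu T b)) (om (mu T c) (mu T d)) \<cdot> R_of xi (To a) (To c) (To b) (To d) = xi (free a) (free c) (free b) (free d)"
    using rt2[OF alg_free alg_free alg_free alg_free] .
  have SL1: "bm (bm (om (mu T x) (mu T y)) (om (mu T a) (mu T b))) (Id (oo (To c) (To d)))
          \<cdot> bm (R_of xi (To x) (To a) (To y) (To b)) (Id (oo (To c) (To d)))
        = bm (xi (free x) (free a) (free y) (free b)) (Id (oo (To c) (To d)))"
    by (simp add: mergeB E1)
  have SR1: "bm (Id (oo (To x) (To y))) (bm (om (mu T a) (mu T b)) (om (mu T c) (mu T d)))
          \<cdot> bm (Id (oo (To x) (To y))) (R_of xi (To a) (To c) (To b) (To d))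
        = bm (Id (oo (To x) (To y))) (xi (free a) (free c) (free b) (free d))"
    by (simp add: mergeB E2)
  have RO: "R_of xi (bo x a) c (bo y b) d = xi (free (bo x a)) (free c) (free (bo y b)) (free d)
      \<cdot> om (bm (eta T (bo x a)) (eta T c)) (bm (eta T (bo y b)) (eta T d))" unfolding R_of_def ..
  have RO': "R_of xi x (bo a c) y (bo b d) = xi (free x) (free (bo a c)) (free y) (free (bo b d))
      \<cdot> om (bm (eta T x) (eta T (bo a c))) (bm (eta T y) (eta T (bo b d)))" unfolding R_of_def ..
  have N1: "xi (liftB (free x) (free a)) (free c) (liftB (free y) (free b)) (free d) \<cdot> om (bm (Tb2 x a) (Id (To c))) (bm (Tb2 y b) (Id (To d)))
     = bm (om (Tb2 x a) (Tb2 y b)) (om (Id (To c)) (Id (To d))) \<cdot> xi (free (bo x a)) (free c) (free (bo y b)) (free d)"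
    using xi_nat2[OF ahTb2 ahId[OF alg_free] ahTb2 ahId[OF alg_free]] by simp
  have N2: "xi (free x) (liftB (free a) (free c)) (free y) (liftB (free b) (free d)) \<cdot> om (bm (Id (To x)) (Tb2 a c)) (bm (Id (To y)) (Tb2 b d))
     = bm (om (Id (To x)) (Id (To y))) (om (Tb2 a c) (Tb2 b d)) \<cdot> xi (free x) (free (bo a c)) (free y) (free (bo b d))"
    using xi_nat2[OF ahId[OF alg_free] ahTb2 ahId[OF alg_free] ahTb2] by simp
  have SL2: "om (bm (Tb2 x a) (Id (To c))) (bm (Tb2 y b) (Id (To d))) \<cdot> om (bm (eta T (bo x a)) (eta T c)) (bm (eta T (bo y b)) (eta T d))
     = om (bm (bm (eta T x) (eta T a)) (eta T c)) (bm (bm (eta T y) (eta T b)) (eta T d))"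
    by (simp add: mergeO mergeB T2e)
  have SR2: "om (bm (Id (To x)) (Tb2 a c)) (bm (Id (To y)) (Tb2 b d)) \<cdot> om (bm (eta T x) (eta T (bo a c))) (bm (eta T y) (eta T (bo b d)))
     = om (bm (eta T x) (bm (eta T a) (eta T c))) (bm (eta T y) (bm (eta T b) (eta T d)))"
    by (simp add: mergeO mergeB T2e)
  have A2: "asc Mb (oo (To x) (To y)) (oo (To a) (To b)) (oo (To c) (To d))
          \<cdot> bm (xi (free x) (free a) (free y) (free b)) (Id (oo (To c) (To d))) \<cdot> xi (liftB (free x) (free a)) (free c) (liftB (free y) (free b)) (free d)
        = bm (Id (oo (To x) (To y))) (xi (free a) (free c) (free b) (free d)) \<cdot> xi (free x) (liftB (free a) (free c)) (free y) (liftB (free b) (free d))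
          \<cdot> om (asc Mb (To x) (To a) (To c)) (asc Mb (To y) (To b) (To d))"
    using de[unfolded duoidal_EM_def, THEN conjunct2, THEN conjunct2, THEN conjunct2, THEN conjunct2, THEN conjunct1, rule_format, OF alg_free alg_free alg_free alg_free alg_free alg_free, of x y a b c d] by simp
  have S3: "om (asc Mb (To x) (To a) (To c)) (asc Mb (To y) (To b) (To d)) \<cdot> om (bm (bm (eta T x) (eta T a)) (eta T c)) (bm (bm (eta T y) (eta T b)) (eta T d))
     = om (bm (eta T x) (bm (eta T a) (eta T c))) (bm (eta T y) (bm (eta T b) (eta T d))) \<cdot> om (asc Mb x a c) (asc Mb y b d)"
    using asc_nat[OF monB, of "eta T x" "eta T a" "eta T c"] asc_nat[OF monB, of "eta T y" "eta T b" "eta T d"]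
    by (simp add: mergeO)
  have "asc Mb (oo (To x) (To y)) (oo (To a) (To b)) (oo (To c) (To d))
          \<cdot> bm (bm (om (mu T x) (mu T y)) (om (mu T a) (mu T b))) (Id (oo (To c) (To d)))
          \<cdot> bm (R_of xi (To x) (To a) (To y) (To b)) (Id (oo (To c) (To d)))
          \<cdot> bm (om (Tb2 x a) (Tb2 y b)) (Id (oo (To c) (To d)))
          \<cdot> R_of xi (bo x a) c (bo y b) d
      = asc Mb (oo (To x) (To y)) (oo (To a) (To b)) (oo (To c) (To d))
          \<cdot> bm (xi (free x) (free a) (free y) (free b)) (Id (oo (To c) (To d)))
          \<cdot> bm (om (Tb2 x a) (Tb2 y b)) (om (Id (To c)) (Id (To d))) \<cdot> xi (free (bo x a)) (free c) (free (bo y b)) (free d)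
          \<cdot> om (bm (eta T (bo x a)) (eta T c)) (bm (eta T (bo y b)) (eta T d))"
    by (simp add: ext[OF SL1] RO)
  also have "\<dots> = asc Mb (oo (To x) (To y)) (oo (To a) (To b)) (oo (To c) (To d))
          \<cdot> bm (xi (free x) (free a) (free y) (free b)) (Id (oo (To c) (To d)))
          \<cdot> xi (liftB (free x) (free a)) (free c) (liftB (free y) (free b)) (free d)
          \<cdot> om (bm (bm (eta T x) (eta T a)) (eta T c)) (bm (bm (eta T y) (eta T b)) (eta T d))"
    using arg_cong[OF N1, of "\<lambda>z. asc Mb (oo (To x) (To y)) (oo (To a) (To b)) (oo (To c) (To d))
          \<cdot> bm (xi (free x) (free a) (free y) (free b)) (Id (oo (To c) (To d))) \<cdot> z
          \<cdot> om (bm (eta T (bo x a)) (eta T c)) (bm (eta T (bo y b)) (eta T d))"]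
    by (simp add: SL2)
  also have "\<dots> = bm (Id (oo (To x) (To y))) (xi (free a) (free c) (free b) (free d)) \<cdot> xi (free x) (liftB (free a) (free c)) (free y) (liftB (free b) (free d))
          \<cdot> om (bm (eta T x) (bm (eta T a) (eta T c))) (bm (eta T y) (bm (eta T b) (eta T d))) \<cdot> om (asc Mb x a c) (asc Mb y b d)"
    using arg_cong[OF A2, of "\<lambda>z. z \<cdot> om (bm (bm (eta T x) (eta T a)) (eta T c)) (bm (bm (eta T y) (eta T b)) (eta T d))"]
    by (simp add: S3)
  also have "\<dots> = bm (Id (oo (To x) (To y))) (xi (free a) (free c) (free b) (free d))
          \<cdot> bm (om (Id (To x)) (Id (To y))) (om (Tb2 a c) (Tb2 b d)) \<cdot> xi (free x) (free (bo a c)) (free y) (free (bo b d))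
          \<cdot> om (bm (eta T x) (eta T (bo a c))) (bm (eta T y) (eta T (bo b d))) \<cdot> om (asc Mb x a c) (asc Mb y b d)"
    using arg_cong[OF N2, of "\<lambda>z. bm (Id (oo (To x) (To y))) (xi (free a) (free c) (free b) (free d)) \<cdot> z
          \<cdot> om (bm (eta T x) (eta T (bo a c))) (bm (eta T y) (eta T (bo b d))) \<cdot> om (asc Mb x a c) (asc Mb y b d)"]
    by (simp add: ext[OF SR2])
  also have "\<dots> = bm (Id (oo (To x) (To y))) (bm (om (mu T a) (mu T b)) (om (mu T c) (mu T d)))
          \<cdot> bm (Id (oo (To x) (To y))) (R_of xi (To a) (To c) (To b) (To d))
          \<cdot> bm (Id (oo (To x) (To y))) (om (Tb2 a c) (Tb2 b d))
          \<cdot> R_of xi x (bo a c) y (bo b d)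
          \<cdot> om (asc Mb x a c) (asc Mb y b d)"
    by (simp add: ext[OF SR1] RO')
  finally show ?thesis .
qed



lemma dir2: "rmatrix (R_of xi) nu varpi iota"
proof -
  have n: "\<forall>a a' b b' c c' d d' f g h k.
        f \<in> Hom a a' \<longrightarrow> g \<in> Hom b b' \<longrightarrow> h \<in> Hom c c' \<longrightarrow> k \<in> Hom d d' \<longrightarrow>
        R_of xi a' b' c' d' \<cdot> om (bm f g) (bm h k) = bm (om (Tm f) (Tm h)) (om (Tm g) (Tm k)) \<cdot> R_of xi a b c d"
    using Rof_nat unfolding Hom_iff by auto
  have u: "\<forall>A B. is_alg T A \<longrightarrow> is_alg T B \<longrightarrow>
        bm (om To0 (snd A)) (om To0 (snd B)) \<cdot> R_of xi bot bot (fst A) (fst B) \<cdot> om nu (Id (bo (fst A) (fst B)))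
          = bm (inv (lu Mo (fst A))) (inv (lu Mo (fst B))) \<cdot> lu Mo (bo (fst A) (fst B)) \<and>
        bm (om (snd A) To0) (om (snd B) To0) \<cdot> R_of xi (fst A) (fst B) bot bot \<cdot> om (Id (bo (fst A) (fst B))) nu
          = bm (inv (ru Mo (fst A))) (inv (ru Mo (fst B))) \<cdot> ru Mo (bo (fst A) (fst B)) \<and>
        bm varpi (Id (oo (fst A) (fst B))) \<cdot> bm (om Tb0 Tb0) (om (snd A) (snd B)) \<cdot> R_of xi one (fst A) one (fst B)
          = inv (lu Mb (oo (fst A) (fst B))) \<cdot> om (lu Mb (fst A)) (lu Mb (fst B)) \<and>
        bm (Id (oo (fst A) (fst B))) varpi \<cdot> bm (om (snd A) (snd B)) (om Tb0 Tb0) \<cdot> R_of xi (fst A) one (fst B) one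
          = inv (ru Mb (oo (fst A) (fst B))) \<cdot> om (ru Mb (fst A)) (ru Mb (fst B))"
    using Rof_unit by blast
  show ?thesis unfolding rmatrix_def
    apply (intro conjI)
          apply (rule ud2)
         apply (intro allI, rule Rof_hom)
        apply (rule n)
       apply (rule u)
      apply (intro allI, rule Rof_lift)
     apply (intro allI, rule Rof_R1)
    apply (intro allI, rule Rof_R2)
    done
qed

lemma roundtrip2: "is_alg T X \<Longrightarrow> is_alg T Y \<Longrightarrow> is_alg T A \<Longrightarrow> is_alg T B \<Longrightarrow>
   xi_of (R_of xi) X Y A B = xi X Y A B"
  unfolding xi_of_def using rt2[of "fst X" "snd X" "fst Y" "snd Y" "fst A" "snd A" "fst B" "snd B"] by simp


end
end

theorem mainTheorem1:
  fixes C :: "('o,'m) cat" and Mo Mb :: "('o,'m) monoidal" and T :: "('o,'m) monad"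
    and To2 Tb2 :: "'o \<Rightarrow> 'o \<Rightarrow> 'm" and To0 Tb0 :: "'m"
  assumes "duo_ctx.preduoidal C Mo Mb"
    and "duo_ctx.sep_opmonoidal_monad C Mo Mb T To2 To0 Tb2 Tb0"
  shows
    "(\<forall>R nu varpi iota. duo_ctx.rmatrix C Mo Mb T To2 To0 Tb2 Tb0 R nu varpi iota \<longrightarrow>
        duo_ctx.duoidal_EM C Mo Mb T To2 To0 Tb2 Tb0 (duo_ctx.xi_of C Mo Mb R) nu varpi iota \<and>
        (\<forall>a b c d. duo_ctx.R_of C Mo Mb T (duo_ctx.xi_of C Mo Mb R) a b c d = R a b c d)) \<and>
     (\<forall>xi nu varpi iota. duo_ctx.duoidal_EM C Mo Mb T To2 To0 Tb2 Tb0 xi nu varpi iota \<longrightarrow>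
        duo_ctx.rmatrix C Mo Mb T To2 To0 Tb2 Tb0 (duo_ctx.R_of C Mo Mb T xi) nu varpi iota \<and>
        (\<forall>X Y A B. cat_ctx.is_alg C T X \<longrightarrow> cat_ctx.is_alg C T Y \<longrightarrow>
           cat_ctx.is_alg C T A \<longrightarrow> cat_ctx.is_alg C T B \<longrightarrow>
           duo_ctx.xi_of C Mo Mb (duo_ctx.R_of C Mo Mb T xi) X Y A B = xi X Y A B))"
proof -
  interpret duo_thy C Mo Mb T To2 To0 Tb2 Tb0
    using assms by unfold_locales
  show ?thesis
  proof (intro conjI allI impI)
    fix R nu varpi iota assume "rmatrix R nu varpi iota"
    thus "duoidal_EM (xi_of R) nu varpi iota" by (rule dir1)
  next
    fix R nu varpi iota a b c d assume "rmatrix R nu varpi iota"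
    thus "R_of (xi_of R) a b c d = R a b c d" by (rule roundtrip1)
  next
    fix xi nu varpi iota assume "duoidal_EM xi nu varpi iota"
    thus "rmatrix (R_of xi) nu varpi iota" by (rule dir2)
  next
    fix xi nu varpi iota X Y A B assume "duoidal_EM xi nu varpi iota"
      "is_alg T X" "is_alg T Y" "is_alg T A" "is_alg T B"
    thus "xi_of (R_of xi) X Y A B = xi X Y A B" by (rule roundtrip2)
  qed
qed

end
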